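(* Let $\phi:\mathcal N_1\to\mathcal N_2$ be an admissible epi-functor between nested graphs. Then there exist a nested graph $\mathcal N_2'$, a merger $\mu:\mathcal N_1\to\mathcal N_2'$ and a contraction $\kappa:\mathcal N_2'\to\mathcal N_2$ such that $\phi=\kappa\circ\mu$ (such a decomposition is in general not unique).
   Context: A nested graph is a small category $\mathcal N$ for which there exists at least one functor $G:\mathcal N\to\underline n$ to a finite ordinal $\underline n$ (viewed as the category with a unique morphism $i\to j$ when $i\le j$ and none otherwise) sending every non-identity morphism to a non-identity morphism. Objects are called nodes. A flag is a non-identity morphism, said to be decorated by its domain. A flag is irreducible if it is not a composite of two flags. A vertex of a nested graph is a node that is not the domain of any flag; a corolla is a nested graph with exactly one vertex. A functor $\phi$ contracts a flag $f$ if $\phi(f)$ is an identity. A functor $\phi:\mathcal N_1\to\mathcal N_2$ between nested graphs is admissible if (1) for every irreducible flag $f$ of $\mathcal N_1$, $\phi(f)$ is an identity or an irreducible flag, and (2) for every irreducible flag $f:A\to B$ of $\mathcal N_1$ contracted by $\phi$, $\phi$ contracts every irreducible flag with domain $A$. An epi-functor $\phi:\mathcal N_1\to\mathcal N_2$ is a functor whose image generates all of $\mathcal N_2$. A merger is an admissible epi-functor $\mu:\mathcal N_1\to\mathcal N_2$ such that $\mathcal N_2$ is a quotient of $\mathcal N_1$ by an equivalence relation on the objects of $\mathcal N_1$. A contraction is an admissible epi-functor $\kappa:\mathcal N_1\to\mathcal N_2$ such that for every node $A_2$ of $\mathcal N_2$ the fiber $\kappa^{-1}(A_2)$ (objects mapped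 to $A_2$, morphisms mapped to the identity of $A_2$) is a corolla. *)

theory Defs
  imports Main
begin

record ('o, 'm) cat =
  cObj  :: "'o set"
  cArr  :: "'m set"
  cDom  :: "'m \<Rightarrow> 'o"
  cCod  :: "'m \<Rightarrow> 'o"
  cId   :: "'o \<Rightarrow> 'm"
  cComp :: "'m \<Rightarrow> 'm \<Rightarrow> 'm"   (* cComp C g f = g \<circ> f, defined when cCod f = cDom g *)

definition category :: "('o, 'm) cat \<Rightarrow> bool" where
  "category C \<longleftrightarrow>
     (\<forall>f\<in>cArr C. cDom C f \<in> cObj C \<and> cCod C f \<in> cObj C) \<and>
     (\<forall>a\<in>cObj C. cId C a \<in> cArr C \<and> cDom C (cId C a) = a \<and> cCod C (cId C a) = a) \<and>
     (\<forall>f\<in>cArr C. \<forall>g\<in>cArr C. cCod C f = cDom C g \<longrightarrow>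
         cComp C g f \<in> cArr C \<and> cDom C (cComp C g f) = cDom C f \<and> cCod C (cComp C g f) = cCod C g) \<and>
     (\<forall>f\<in>cArr C. cComp C f (cId C (cDom C f)) = f \<and> cComp C (cId C (cCod C f)) f = f) \<and>
     (\<forall>f\<in>cArr C. \<forall>g\<in>cArr C. \<forall>h\<in>cArr C. cCod C f = cDom C g \<longrightarrow> cCod C g = cDom C h \<longrightarrow>
         cComp C h (cComp C g f) = cComp C (cComp C h g) f)"

text \<open>A functor is given by its object map and its arrow map (only their values on the
  carriers matter).\<close>

definition is_functor :: "('o1, 'm1) cat \<Rightarrow> ('o2, 'm2) cat \<Rightarrow> ('o1 \<Rightarrow> 'o2) \<Rightarrow> ('m1 \<Rightarrow> 'm2) \<Rightarrow> bool" where
  "is_functor C D Fo Fm \<longleftrightarrow> category C \<and> category D \<and>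
     (\<forall>a\<in>cObj C. Fo a \<in> cObj D) \<and>
     (\<forall>f\<in>cArr C. Fm f \<in> cArr D \<and> cDom D (Fm f) = Fo (cDom C f) \<and> cCod D (Fm f) = Fo (cCod C f)) \<and>
     (\<forall>a\<in>cObj C. Fm (cId C a) = cId D (Fo a)) \<and>
     (\<forall>f\<in>cArr C. \<forall>g\<in>cArr C. cCod C f = cDom C g \<longrightarrow> Fm (cComp C g f) = cComp D (Fm g) (Fm f))"

definition iso_functor :: "('o1, 'm1) cat \<Rightarrow> ('o2, 'm2) cat \<Rightarrow> ('o1 \<Rightarrow> 'o2) \<Rightarrow> ('m1 \<Rightarrow> 'm2) \<Rightarrow> bool" where
  "iso_functor C D Fo Fm \<longleftrightarrow> is_functor C D Fo Fm \<and> bij_betw Fo (cObj C) (cObj D) \<and> bij_betw Fm (cArr C) (cArr D)"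

definition ord_cat :: "nat \<Rightarrow> (nat, nat \<times> nat) cat" where
  "ord_cat n = \<lparr> cObj = {..<n}, cArr = {(i, j). i \<le> j \<and> j < n}, cDom = fst, cCod = snd,
                 cId = (\<lambda>i. (i, i)), cComp = (\<lambda>g f. (fst f, snd g)) \<rparr>"

definition is_flag :: "('o, 'm) cat \<Rightarrow> 'm \<Rightarrow> bool" where
  "is_flag C f \<longleftrightarrow> f \<in> cArr C \<and> f \<noteq> cId C (cDom C f)"

definition nested_graph :: "('o, 'm) cat \<Rightarrow> bool" where
  "nested_graph N \<longleftrightarrow> category N \<and>
     (\<exists>n Go Gm. is_functor N (ord_cat n) Go Gm \<and> (\<forall>f. is_flag N f \<longrightarrow> is_flag (ord_cat n) (Gm f)))"

definition irreducible_flag :: "('o, 'm) cat \<Rightarrow> 'm \<Rightarrow> bool" where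
  "irreducible_flag C f \<longleftrightarrow> is_flag C f \<and>
     \<not> (\<exists>g h. is_flag C g \<and> is_flag C h \<and> cCod C h = cDom C g \<and> f = cComp C g h)"

definition is_vertex :: "('o, 'm) cat \<Rightarrow> 'o \<Rightarrow> bool" where
  "is_vertex C a \<longleftrightarrow> a \<in> cObj C \<and> \<not> (\<exists>f. is_flag C f \<and> cDom C f = a)"

definition corolla :: "('o, 'm) cat \<Rightarrow> bool" where
  "corolla C \<longleftrightarrow> nested_graph C \<and> (\<exists>!a. is_vertex C a)"

definition contracts :: "('o1, 'm1) cat \<Rightarrow> ('o2, 'm2) cat \<Rightarrow> ('o1 \<Rightarrow> 'o2) \<Rightarrow> ('m1 \<Rightarrow> 'm2) \<Rightarrow> 'm1 \<Rightarrow> bool" where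
  "contracts C D Fo Fm f \<longleftrightarrow> Fm f = cId D (Fo (cDom C f))"

definition admissible :: "('o1, 'm1) cat \<Rightarrow> ('o2, 'm2) cat \<Rightarrow> ('o1 \<Rightarrow> 'o2) \<Rightarrow> ('m1 \<Rightarrow> 'm2) \<Rightarrow> bool" where
  "admissible C D Fo Fm \<longleftrightarrow> is_functor C D Fo Fm \<and>
     (\<forall>f. irreducible_flag C f \<longrightarrow> contracts C D Fo Fm f \<or> irreducible_flag D (Fm f)) \<and>
     (\<forall>f g. irreducible_flag C f \<longrightarrow> contracts C D Fo Fm f \<longrightarrow>
            irreducible_flag C g \<longrightarrow> cDom C g = cDom C f \<longrightarrow> contracts C D Fo Fm g)"

inductive_set generated_arrows :: "('o, 'm) cat \<Rightarrow> 'm set \<Rightarrow> 'm set" for C S where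
  gen_base: "f \<in> S \<Longrightarrow> f \<in> generated_arrows C S"
| gen_comp: "f \<in> generated_arrows C S \<Longrightarrow> g \<in> generated_arrows C S \<Longrightarrow> cCod C f = cDom C g
              \<Longrightarrow> cComp C g f \<in> generated_arrows C S"

definition epi_functor :: "('o1, 'm1) cat \<Rightarrow> ('o2, 'm2) cat \<Rightarrow> ('o1 \<Rightarrow> 'o2) \<Rightarrow> ('m1 \<Rightarrow> 'm2) \<Rightarrow> bool" where
  "epi_functor C D Fo Fm \<longleftrightarrow> is_functor C D Fo Fm \<and> cArr D \<subseteq> generated_arrows D (Fm ` cArr C)"

text \<open>Arrows of the quotient \<open>C/R\<close> are classes of nonempty paths \<open>[f1,...,fk]\<close> (diagram order)
  of arrows of \<open>C\<close> with \<open>cCod fi R cDom f(i+1)\<close>, modulo the congruence generated by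
  composition in \<open>C\<close> and deletion of identities.  This is the category freely obtained from
  \<open>C\<close> by identifying \<open>R\<close>-equivalent objects.\<close>

definition qpath :: "('o, 'm) cat \<Rightarrow> 'o rel \<Rightarrow> 'm list \<Rightarrow> bool" where
  "qpath C R ps \<longleftrightarrow> ps \<noteq> [] \<and> set ps \<subseteq> cArr C \<and>
     (\<forall>i. Suc i < length ps \<longrightarrow> (cCod C (ps ! i), cDom C (ps ! Suc i)) \<in> R)"

inductive_set qstep :: "('o, 'm) cat \<Rightarrow> 'o rel \<Rightarrow> ('m list \<times> 'm list) set" for C R where
  qstep_comp: "qpath C R (p @ [f, g] @ q) \<Longrightarrow> cCod C f = cDom C g
                 \<Longrightarrow> (p @ [f, g] @ q, p @ [cComp C g f] @ q) \<in> qstep C R"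
| qstep_id: "qpath C R (p @ [cId C a] @ q) \<Longrightarrow> a \<in> cObj C \<Longrightarrow> p @ q \<noteq> []
                 \<Longrightarrow> (p @ [cId C a] @ q, p @ q) \<in> qstep C R"

definition qeq :: "('o, 'm) cat \<Rightarrow> 'o rel \<Rightarrow> ('m list \<times> 'm list) set" where
  "qeq C R = (qstep C R \<union> (qstep C R)\<inverse>)\<^sup>*"

definition quot_cat :: "('o, 'm) cat \<Rightarrow> 'o rel \<Rightarrow> ('o set, 'm list set) cat" where
  "quot_cat C R = \<lparr>
     cObj = cObj C // R,
     cArr = {qeq C R `` {p} | p. qpath C R p},
     cDom = (\<lambda>P. R `` {cDom C (hd (SOME p. p \<in> P))}),
     cCod = (\<lambda>P. R `` {cCod C (last (SOME p. p \<in> P))}),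
     cId = (\<lambda>X. qeq C R `` {[cId C (SOME a. a \<in> X)]}),
     cComp = (\<lambda>Q P. qeq C R `` {(SOME p. p \<in> P) @ (SOME q. q \<in> Q)}) \<rparr>"

text \<open>\<open>D\<close> is a quotient of \<open>C\<close> by an equivalence relation on objects, via \<open>F\<close>: \<open>F\<close> is, up to
  isomorphism of the target, the projection \<open>C \<rightarrow> C/R\<close>.\<close>

definition is_quotient :: "('o1, 'm1) cat \<Rightarrow> ('o2, 'm2) cat \<Rightarrow> ('o1 \<Rightarrow> 'o2) \<Rightarrow> ('m1 \<Rightarrow> 'm2) \<Rightarrow> bool" where
  "is_quotient C D Fo Fm \<longleftrightarrow> (\<exists>R. equiv (cObj C) R \<and>
     (\<exists>Io Im. iso_functor (quot_cat C R) D Io Im \<and>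
        (\<forall>a\<in>cObj C. Io (R `` {a}) = Fo a) \<and>
        (\<forall>f\<in>cArr C. Im (qeq C R `` {[f]}) = Fm f)))"

definition merger :: "('o1, 'm1) cat \<Rightarrow> ('o2, 'm2) cat \<Rightarrow> ('o1 \<Rightarrow> 'o2) \<Rightarrow> ('m1 \<Rightarrow> 'm2) \<Rightarrow> bool" where
  "merger C D Fo Fm \<longleftrightarrow> admissible C D Fo Fm \<and> epi_functor C D Fo Fm \<and> is_quotient C D Fo Fm"

definition fiber :: "('o1, 'm1) cat \<Rightarrow> ('o2, 'm2) cat \<Rightarrow> ('o1 \<Rightarrow> 'o2) \<Rightarrow> ('m1 \<Rightarrow> 'm2) \<Rightarrow> 'o2 \<Rightarrow> ('o1, 'm1) cat" where
  "fiber C D Fo Fm A = \<lparr> cObj = {a \<in> cObj C. Fo a = A}, cArr = {f \<in> cArr C. Fm f = cId D A},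
      cDom = cDom C, cCod = cCod C, cId = cId C, cComp = cComp C \<rparr>"

definition contraction :: "('o1, 'm1) cat \<Rightarrow> ('o2, 'm2) cat \<Rightarrow> ('o1 \<Rightarrow> 'o2) \<Rightarrow> ('m1 \<Rightarrow> 'm2) \<Rightarrow> bool" where
  "contraction C D Fo Fm \<longleftrightarrow> admissible C D Fo Fm \<and> epi_functor C D Fo Fm \<and>
     (\<forall>A\<in>cObj D. corolla (fiber C D Fo Fm A))"

end

theory Submission
  imports Defs
begin

section \<open>Category basics\<close>

lemma cat_dom: "category C \<Longrightarrow> f \<in> cArr C \<Longrightarrow> cDom C f \<in> cObj C" unfolding category_def by blast
lemma cat_cod: "category C \<Longrightarrow> f \<in> cArr C \<Longrightarrow> cCod C f \<in> cObj C" unfolding category_def by blast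
lemma cat_id: "category C \<Longrightarrow> a \<in> cObj C \<Longrightarrow> cId C a \<in> cArr C" unfolding category_def by blast
lemma cat_id_dom[simp]: "category C \<Longrightarrow> a \<in> cObj C \<Longrightarrow> cDom C (cId C a) = a" unfolding category_def by blast
lemma cat_id_cod[simp]: "category C \<Longrightarrow> a \<in> cObj C \<Longrightarrow> cCod C (cId C a) = a" unfolding category_def by blast
lemma cat_comp: "category C \<Longrightarrow> f \<in> cArr C \<Longrightarrow> g \<in> cArr C \<Longrightarrow> cCod C f = cDom C g \<Longrightarrow> cComp C g f \<in> cArr C"
  unfolding category_def by blast
lemma cat_comp_dom[simp]: "category C \<Longrightarrow> f \<in> cArr C \<Longrightarrow> g \<in> cArr C \<Longrightarrow> cCod C f = cDom C g \<Longrightarrow> cDom C (cComp C g f) = cDom C f"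
  unfolding category_def by blast
lemma cat_comp_cod[simp]: "category C \<Longrightarrow> f \<in> cArr C \<Longrightarrow> g \<in> cArr C \<Longrightarrow> cCod C f = cDom C g \<Longrightarrow> cCod C (cComp C g f) = cCod C g"
  unfolding category_def by blast
lemma cat_idl: "category C \<Longrightarrow> f \<in> cArr C \<Longrightarrow> cComp C (cId C (cCod C f)) f = f" unfolding category_def by blast
lemma cat_idr: "category C \<Longrightarrow> f \<in> cArr C \<Longrightarrow> cComp C f (cId C (cDom C f)) = f" unfolding category_def by blast
lemma cat_assoc: "category C \<Longrightarrow> f \<in> cArr C \<Longrightarrow> g \<in> cArr C \<Longrightarrow> h \<in> cArr C \<Longrightarrow> cCod C f = cDom C g \<Longrightarrow> cCod C g = cDom C h \<Longrightarrow>
         cComp C h (cComp C g f) = cComp C (cComp C h g) f" unfolding category_def by blast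

section \<open>Paths\<close>

lemma qpath_single[simp]: "qpath C R [f] \<longleftrightarrow> f \<in> cArr C"
  by (simp add: qpath_def)

lemma qpath_Cons: "r \<noteq> [] \<Longrightarrow> qpath C R (f # r) \<longleftrightarrow> f \<in> cArr C \<and> (cCod C f, cDom C (hd r)) \<in> R \<and> qpath C R r"
proof -
  assume r: "r \<noteq> []"
  show ?thesis
  proof
    assume q: "qpath C R (f # r)"
    have "(cCod C f, cDom C (hd r)) \<in> R" using q r unfolding qpath_def
      by (metis hd_conv_nth length_Cons length_greater_0_conv nth_Cons_0 nth_Cons_Suc Suc_less_eq)
    moreover have "qpath C R r"
    proof -
      have a: "\<forall>i. Suc i < length (f # r) \<longrightarrow> (cCod C ((f # r) ! i), cDom C ((f # r) ! Suc i)) \<in> R"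
        using q by (simp add: qpath_def)
      have "\<forall>i. Suc i < length r \<longrightarrow> (cCod C (r ! i), cDom C (r ! Suc i)) \<in> R"
      proof (intro allI impI)
        fix i assume "Suc i < length r"
        then show "(cCod C (r ! i), cDom C (r ! Suc i)) \<in> R" using a[rule_format, of "Suc i"] by simp
      qed
      then show ?thesis using q r by (simp add: qpath_def)
    qed
    ultimately show "f \<in> cArr C \<and> (cCod C f, cDom C (hd r)) \<in> R \<and> qpath C R r" using q by (simp add: qpath_def)
  next
    assume h: "f \<in> cArr C \<and> (cCod C f, cDom C (hd r)) \<in> R \<and> qpath C R r"
    show "qpath C R (f # r)" unfolding qpath_def
    proof (intro conjI allI impI)
      show "f # r \<noteq> []" by simp
      show "set (f # r) \<subseteq> cArr C" using h by (simp add: qpath_def)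
      fix i assume "Suc i < length (f # r)"
      then show "(cCod C ((f # r) ! i), cDom C ((f # r) ! Suc i)) \<in> R" using h r
        by (cases i) (auto simp: qpath_def hd_conv_nth)
    qed
  qed
qed

lemma qpath_Cons2[simp]: "qpath C R (f # g # r) \<longleftrightarrow> f \<in> cArr C \<and> (cCod C f, cDom C g) \<in> R \<and> qpath C R (g # r)"
  using qpath_Cons[of "g # r"] by simp

lemma qpath_nonempty: "qpath C R p \<Longrightarrow> p \<noteq> []" by (simp add: qpath_def)

lemma qpath_app: "x \<noteq> [] \<Longrightarrow> y \<noteq> [] \<Longrightarrow>
   qpath C R (x @ y) \<longleftrightarrow> qpath C R x \<and> qpath C R y \<and> (cCod C (last x), cDom C (hd y)) \<in> R"
proof (induction x)
  case Nil then show ?case by simp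
next
  case (Cons a x)
  show ?case
  proof (cases "x = []")
    case True
    then show ?thesis using Cons.prems qpath_Cons[of y C R a] by auto
  next
    case False
    then show ?thesis using Cons qpath_Cons[of "x @ y" C R a] qpath_Cons[of x C R a] by auto
  qed
qed

lemma qpath_arrs: "qpath C R p \<Longrightarrow> set p \<subseteq> cArr C" by (simp add: qpath_def)


lemma qpath_app3: "m \<noteq> [] \<Longrightarrow> qpath C R (p @ m @ q) \<longleftrightarrow> qpath C R m \<and>
   (p \<noteq> [] \<longrightarrow> qpath C R p \<and> (cCod C (last p), cDom C (hd m)) \<in> R) \<and>
   (q \<noteq> [] \<longrightarrow> qpath C R q \<and> (cCod C (last m), cDom C (hd q)) \<in> R)"
  by (cases "p = []"; cases "q = []") (auto simp: qpath_app)

locale qc =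
  fixes C :: "('o, 'm) cat" and R :: "'o rel"
  assumes cat: "category C" and eqv: "equiv (cObj C) R"
begin

abbreviation dc :: "'m list \<Rightarrow> 'o set" where "dc p \<equiv> R `` {cDom C (hd p)}"
abbreviation cc :: "'m list \<Rightarrow> 'o set" where "cc p \<equiv> R `` {cCod C (last p)}"

lemma R_obj: "(a, b) \<in> R \<Longrightarrow> a \<in> cObj C \<and> b \<in> cObj C"
  using eqv by (auto simp: equiv_def refl_on_def)
lemma R_refl: "a \<in> cObj C \<Longrightarrow> (a, a) \<in> R"
  using eqv by (auto simp: equiv_def refl_on_def)
lemma R_sym: "(a, b) \<in> R \<Longrightarrow> (b, a) \<in> R"
  using eqv by (auto simp: equiv_def sym_def)
lemma R_trans: "(a, b) \<in> R \<Longrightarrow> (b, c) \<in> R \<Longrightarrow> (a, c) \<in> R"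
  using eqv by (auto simp: equiv_def trans_def)
lemma R_cls: "(a, b) \<in> R \<Longrightarrow> R `` {a} = R `` {b}"
  using eqv equiv_class_eq by fastforce
lemma R_cls_iff: "a \<in> cObj C \<Longrightarrow> R `` {a} = R `` {b} \<longleftrightarrow> (a, b) \<in> R"
proof
  assume a: "a \<in> cObj C" and e: "R `` {a} = R `` {b}"
  have "a \<in> R `` {a}" using R_refl a by simp
  then have "(b, a) \<in> R" using e by simp
  then show "(a, b) \<in> R" using R_sym by blast
qed (rule R_cls)

lemma qpath_hd_arr: "qpath C R p \<Longrightarrow> hd p \<in> cArr C"
  by (metis hd_in_set qpath_arrs qpath_nonempty subsetD)
lemma qpath_last_arr: "qpath C R p \<Longrightarrow> last p \<in> cArr C"
  by (metis last_in_set qpath_arrs qpath_nonempty subsetD)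

lemma hd_app3: "m \<noteq> [] \<Longrightarrow> hd (p @ m @ q) = (if p = [] then hd m else hd p)"
  by (cases p) auto
lemma last_app3: "m \<noteq> [] \<Longrightarrow> last (p @ m @ q) = (if q = [] then last m else last q)"
  by (cases q rule: rev_cases) auto

lemma qstep_props: assumes "(x, y) \<in> qstep C R"
  shows "qpath C R x \<and> qpath C R y \<and> dc x = dc y \<and> cc x = cc y"
  using assms
proof cases
  case (qstep_comp p f g q)
  have A: "qpath C R [f, g] \<and>
   (p \<noteq> [] \<longrightarrow> qpath C R p \<and> (cCod C (last p), cDom C f) \<in> R) \<and>
   (q \<noteq> [] \<longrightarrow> qpath C R q \<and> (cCod C g, cDom C (hd q)) \<in> R)"
    using qstep_comp(3) qpath_app3[of "[f,g]" C R p q] by simp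
  then have f: "f \<in> cArr C" and g: "g \<in> cArr C" by auto
  have cf: "cComp C g f \<in> cArr C" by (rule cat_comp[OF cat f g qstep_comp(4)])
  have d: "cDom C (cComp C g f) = cDom C f" and c: "cCod C (cComp C g f) = cCod C g"
    using cat f g qstep_comp(4) by auto
  have qy: "qpath C R (p @ [cComp C g f] @ q)"
    apply (subst qpath_app3) using A cf d c by auto
  have h1: "hd x = (if p = [] then f else hd p)" using qstep_comp(1) hd_app3[of "[f,g]" p q] by simp
  have h2: "hd y = (if p = [] then cComp C g f else hd p)" using qstep_comp(2) hd_app3[of "[cComp C g f]" p q] by simp
  have l1: "last x = (if q = [] then g else last q)" using qstep_comp(1) last_app3[of "[f,g]" p q] by simp
  have l2: "last y = (if q = [] then cComp C g f else last q)" using qstep_comp(2) last_app3[of "[cComp C g f]" p q] by simp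
  have e1: "dc x = dc y" using h1 h2 d by simp
  have e2: "cc x = cc y" using l1 l2 c by simp
  show ?thesis using qstep_comp qy e1 e2 by simp
next
  case (qstep_id p a q)
  have a: "cId C a \<in> cArr C" by (rule cat_id[OF cat qstep_id(4)])
  have ia: "cDom C (cId C a) = a" "cCod C (cId C a) = a" using cat qstep_id(4) by auto
  have A: "(p \<noteq> [] \<longrightarrow> qpath C R p \<and> (cCod C (last p), a) \<in> R) \<and>
   (q \<noteq> [] \<longrightarrow> qpath C R q \<and> (a, cDom C (hd q)) \<in> R)"
    using qstep_id(3) qpath_app3[of "[cId C a]" C R p q] ia by simp
  have qx: "qpath C R x" using qstep_id by simp
  have qy: "qpath C R y"
  proof (cases "p = []")
    case True then show ?thesis using qstep_id A by auto
  next
    case False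
    show ?thesis
    proof (cases "q = []")
      case True then show ?thesis using qstep_id A by auto
    next
      case False
      have "(cCod C (last p), cDom C (hd q)) \<in> R" 
        using A False \<open>p \<noteq> []\<close> R_trans[of "cCod C (last p)" a "cDom C (hd q)"] by simp
      then show ?thesis using \<open>p \<noteq> []\<close> False qstep_id A qpath_app[of p q C R] by simp
    qed
  qed
  have dd: "dc x = dc y"
  proof (cases "p = []")
    case True
    then have "q \<noteq> []" using qstep_id by simp
    then have "(a, cDom C (hd q)) \<in> R" using A by simp
    then have "R `` {a} = R `` {cDom C (hd q)}" by (rule R_cls)
    then show ?thesis using qstep_id True ia by simp
  next
    case False then show ?thesis using qstep_id by simp
  qed
  have ccc: "cc x = cc y"
  proof (cases "q = []")
    case True
    then have "p \<noteq> []" using qstep_id by simp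
    then have "(cCod C (last p), a) \<in> R" using A by simp
    then have "R `` {cCod C (last p)} = R `` {a}" by (rule R_cls)
    then show ?thesis using qstep_id True ia by simp
  next
    case False then show ?thesis using qstep_id by simp
  qed
  show ?thesis using qx qy dd ccc by simp
qed

lemma qeq_props: assumes "(x, y) \<in> qeq C R" "qpath C R x"
  shows "qpath C R y \<and> dc x = dc y \<and> cc x = cc y"
  using assms(1) unfolding qeq_def
proof (induction rule: rtrancl_induct)
  case base then show ?case using assms(2) by simp
next
  case (step y z)
  then show ?case using qstep_props by auto
qed

lemma qeq_refl[simp]: "(x, x) \<in> qeq C R" by (simp add: qeq_def)
lemma qeq_sym: "(x, y) \<in> qeq C R \<Longrightarrow> (y, x) \<in> qeq C R"
  unfolding qeq_def
  by (metis converse_Un converse_converse converse_iff rtrancl_converse sup_commute)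
lemma qeq_trans: "(x, y) \<in> qeq C R \<Longrightarrow> (y, z) \<in> qeq C R \<Longrightarrow> (x, z) \<in> qeq C R"
  unfolding qeq_def by (rule rtrancl_trans)
lemma qeq_step: "(x, y) \<in> qstep C R \<Longrightarrow> (x, y) \<in> qeq C R"
  unfolding qeq_def by auto
lemma qeq_equiv: "equiv UNIV (qeq C R)"
  by (auto simp: equiv_def refl_on_def sym_def trans_def intro: qeq_sym qeq_trans)

lemma class_eq_iff: "qeq C R `` {x} = qeq C R `` {y} \<longleftrightarrow> (x, y) \<in> qeq C R"
  using equiv_class_eq_iff[OF qeq_equiv] by simp
lemma class_mem: "x \<in> qeq C R `` {x}" by simp

lemma qstep_appR: assumes "(x, y) \<in> qstep C R" "qpath C R z" "(cCod C (last x), cDom C (hd z)) \<in> R"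
  shows "(x @ z, y @ z) \<in> qstep C R"
  using assms(1)
proof cases
  case (qstep_comp p f g q)
  have "qpath C R (x @ z)" using assms qstep_props qpath_app qpath_nonempty by metis
  then show ?thesis using qstep_comp qstep.qstep_comp[of C R p f g "q @ z"] by simp
next
  case (qstep_id p a q)
  have "qpath C R (x @ z)" using assms qstep_props qpath_app qpath_nonempty by metis
  then show ?thesis using qstep_id qstep.qstep_id[of C R p a "q @ z"] by auto
qed

lemma qstep_appL: assumes "(x, y) \<in> qstep C R" "qpath C R z" "(cCod C (last z), cDom C (hd x)) \<in> R"
  shows "(z @ x, z @ y) \<in> qstep C R"
  using assms(1)
proof cases
  case (qstep_comp p f g q)
  have "qpath C R (z @ x)" using assms qstep_props qpath_app qpath_nonempty by metis
  then show ?thesis using qstep_comp qstep.qstep_comp[of C R "z @ p" f g q] by simp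
next
  case (qstep_id p a q)
  have "qpath C R (z @ x)" using assms qstep_props qpath_app qpath_nonempty by metis
  then show ?thesis using qstep_id qstep.qstep_id[of C R "z @ p" a q] qpath_nonempty[OF assms(2)] by simp
qed

lemma qeq_appR: assumes "(x, y) \<in> qeq C R" "qpath C R x" "qpath C R z" "(cCod C (last x), cDom C (hd z)) \<in> R"
  shows "(x @ z, y @ z) \<in> qeq C R"
  using assms(1) unfolding qeq_def
proof (induction rule: rtrancl_induct)
  case base then show ?case by simp
next
  case (step y w)
  have qy: "qpath C R y" "cc y = cc x" using qeq_props[of x y] assms step(1) unfolding qeq_def by auto
  have jy: "(cCod C (last y), cDom C (hd z)) \<in> R" using qy assms(4) R_cls_iff
    by (metis Image_singleton_iff R_obj R_refl)
  from step(2) show ?case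
  proof
    assume "(y, w) \<in> qstep C R"
    then have "(y @ z, w @ z) \<in> qstep C R" using qstep_appR assms(3) jy by blast
    then show ?thesis using step(3) by (meson UnI1 rtrancl.rtrancl_into_rtrancl)
  next
    assume "(y, w) \<in> (qstep C R)\<inverse>"
    then have yw: "(w, y) \<in> qstep C R" by simp
    then have "cc w = cc y" using qstep_props by blast
    then have "(cCod C (last w), cDom C (hd z)) \<in> R" using jy
      by (metis Image_singleton_iff R_obj R_refl R_sym R_trans)
    then have "(w @ z, y @ z) \<in> qstep C R" using qstep_appR assms(3) yw by blast
    then show ?thesis using step(3) by (meson UnI2 converse_iff rtrancl.rtrancl_into_rtrancl)
  qed
qed

lemma qeq_appL: assumes "(x, y) \<in> qeq C R" "qpath C R x" "qpath C R z" "(cCod C (last z), cDom C (hd x)) \<in> R"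
  shows "(z @ x, z @ y) \<in> qeq C R"
  using assms(1) unfolding qeq_def
proof (induction rule: rtrancl_induct)
  case base then show ?case by simp
next
  case (step y w)
  have qy: "qpath C R y" "dc y = dc x" using qeq_props[of x y] assms step(1) unfolding qeq_def by auto
  have jy: "(cCod C (last z), cDom C (hd y)) \<in> R" using qy assms(4)
    by (metis Image_singleton_iff R_obj R_refl R_sym R_trans)
  from step(2) show ?case
  proof
    assume "(y, w) \<in> qstep C R"
    then have "(z @ y, z @ w) \<in> qstep C R" using qstep_appL assms(3) jy by blast
    then show ?thesis using step(3) by (meson UnI1 rtrancl.rtrancl_into_rtrancl)
  next
    assume "(y, w) \<in> (qstep C R)\<inverse>"
    then have yw: "(w, y) \<in> qstep C R" by simp
    then have "dc w = dc y" using qstep_props by blast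
    then have "(cCod C (last z), cDom C (hd w)) \<in> R" using jy
      by (metis Image_singleton_iff R_obj R_refl R_sym R_trans)
    then have "(z @ w, z @ y) \<in> qstep C R" using qstep_appL assms(3) yw by blast
    then show ?thesis using step(3) by (meson UnI2 converse_iff rtrancl.rtrancl_into_rtrancl)
  qed
qed

lemma qeq_app2: assumes "(x, x') \<in> qeq C R" "(y, y') \<in> qeq C R" "qpath C R x" "qpath C R y"
   "(cCod C (last x), cDom C (hd y)) \<in> R"
  shows "(x @ y, x' @ y') \<in> qeq C R"
proof -
  have 1: "(x @ y, x' @ y) \<in> qeq C R" using qeq_appR assms by blast
  have px: "qpath C R x'" "cc x' = cc x" using qeq_props assms by auto
  have "(cCod C (last x'), cDom C (hd y)) \<in> R" using px assms(5)
    by (metis Image_singleton_iff R_obj R_refl R_sym R_trans)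
  then have 2: "(x' @ y, x' @ y') \<in> qeq C R" using qeq_appL assms px by blast
  show ?thesis using 1 2 qeq_trans by blast
qed

lemma id_qeq: assumes "(a, b) \<in> R" shows "([cId C a], [cId C b]) \<in> qeq C R"
proof -
  have ab: "a \<in> cObj C" "b \<in> cObj C" using R_obj assms by auto
  have q: "qpath C R [cId C a, cId C b]" using ab assms cat cat_id by auto
  have 1: "([cId C a, cId C b], [cId C b]) \<in> qstep C R"
    using qstep.qstep_id[of C R "[]" a "[cId C b]"] q ab by simp
  have 2: "([cId C a, cId C b], [cId C a]) \<in> qstep C R"
    using qstep.qstep_id[of C R "[cId C a]" b "[]"] q ab by simp
  show ?thesis using 1 2 qeq_step qeq_sym qeq_trans by blast
qed

end

context qc begin

abbreviation Q where "Q \<equiv> quot_cat C R"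
abbreviation cls where "cls p \<equiv> qeq C R `` {p}"

lemma Q_arr: "P \<in> cArr Q \<longleftrightarrow> (\<exists>p. qpath C R p \<and> P = cls p)"
  by (auto simp: quot_cat_def)
lemma Q_obj: "cObj Q = cObj C // R" by (simp add: quot_cat_def)

lemma some_cls: assumes "qpath C R p"
  shows "(p, SOME p'. p' \<in> cls p) \<in> qeq C R" and "qpath C R (SOME p'. p' \<in> cls p)"
    and "dc (SOME p'. p' \<in> cls p) = dc p" and "cc (SOME p'. p' \<in> cls p) = cc p"
proof -
  have "(SOME p'. p' \<in> cls p) \<in> cls p" by (rule someI[of _ p]) simp
  then show 1: "(p, SOME p'. p' \<in> cls p) \<in> qeq C R" by simp
  show "qpath C R (SOME p'. p' \<in> cls p)" "dc (SOME p'. p' \<in> cls p) = dc p" "cc (SOME p'. p' \<in> cls p) = cc p"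
    using qeq_props[OF 1 assms] by auto
qed

lemma Q_dom: "qpath C R p \<Longrightarrow> cDom Q (cls p) = dc p"
  using some_cls(3) by (simp add: quot_cat_def)
lemma Q_cod: "qpath C R p \<Longrightarrow> cCod Q (cls p) = cc p"
  using some_cls(4) by (simp add: quot_cat_def)

lemma Q_id: assumes "a \<in> cObj C" shows "cId Q (R `` {a}) = cls [cId C a]"
proof -
  have "(SOME b. b \<in> R `` {a}) \<in> R `` {a}" by (rule someI[of _ a]) (simp add: R_refl assms)
  then have "([cId C a], [cId C (SOME b. b \<in> R `` {a})]) \<in> qeq C R" using id_qeq by simp
  then have "cls [cId C (SOME b. b \<in> R `` {a})] = cls [cId C a]" using class_eq_iff qeq_sym by blast
  then show ?thesis by (simp add: quot_cat_def)
qed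

lemma Q_comp: assumes "qpath C R p" "qpath C R q" "(cCod C (last p), cDom C (hd q)) \<in> R"
  shows "cComp Q (cls q) (cls p) = cls (p @ q)"
proof -
  let ?p = "SOME p'. p' \<in> cls p" and ?q = "SOME p'. p' \<in> cls q"
  have 1: "(?p, p) \<in> qeq C R" "(?q, q) \<in> qeq C R" using some_cls(1) assms qeq_sym by blast+
  have 2: "qpath C R ?p" "qpath C R ?q" using some_cls(2) assms by blast+
  have "cc ?p = cc p" "dc ?q = dc q" using some_cls assms by blast+
  then have "R `` {cCod C (last ?p)} = R `` {cDom C (hd ?q)}" using assms(3) R_cls by simp
  then have 3: "(cCod C (last ?p), cDom C (hd ?q)) \<in> R"
    using R_cls_iff qpath_last_arr[OF 2(1)] cat_cod[OF cat] by blast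
  have "(?p @ ?q, p @ q) \<in> qeq C R" using qeq_app2[OF 1 2 3] .
  then have "cls (?p @ ?q) = cls (p @ q)" using class_eq_iff by blast
  then show ?thesis by (simp add: quot_cat_def)
qed

lemma qpath_dc_obj: "qpath C R p \<Longrightarrow> cDom C (hd p) \<in> cObj C"
  using qpath_hd_arr cat_dom[OF cat] by blast
lemma qpath_cc_obj: "qpath C R p \<Longrightarrow> cCod C (last p) \<in> cObj C"
  using qpath_last_arr cat_cod[OF cat] by blast

lemma junction: "qpath C R p \<Longrightarrow> cc p = dc q \<Longrightarrow> (cCod C (last p), cDom C (hd q)) \<in> R"
  using R_cls_iff qpath_cc_obj by blast

lemma Q_cat: "category Q"
  unfolding category_def
proof (intro conjI ballI impI)
  fix P assume "P \<in> cArr Q"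
  then obtain p where p: "qpath C R p" "P = cls p" using Q_arr by blast
  show "cDom Q P \<in> cObj Q" unfolding Q_obj Q_dom[OF p(1)] p(2) by (rule quotientI[OF qpath_dc_obj[OF p(1)]])
  show "cCod Q P \<in> cObj Q" unfolding Q_obj Q_cod[OF p(1)] p(2) by (rule quotientI[OF qpath_cc_obj[OF p(1)]])
next
  fix X assume "X \<in> cObj Q"
  then obtain a where a: "a \<in> cObj C" "X = R `` {a}" unfolding Q_obj by (rule quotientE)
  have qa: "qpath C R [cId C a]" using cat_id[OF cat a(1)] by simp
  show "cId Q X \<in> cArr Q" unfolding Q_arr using a Q_id[OF a(1)] qa by blast
  show "cDom Q (cId Q X) = X" using a Q_id qa Q_dom cat by simp
  show "cCod Q (cId Q X) = X" using a Q_id qa Q_cod cat by simp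
next
  fix P P' assume P: "P \<in> cArr Q" and P': "P' \<in> cArr Q" and e: "cCod Q P = cDom Q P'"
  obtain p where p: "qpath C R p" "P = cls p" using P Q_arr by blast
  obtain q where q: "qpath C R q" "P' = cls q" using P' Q_arr by blast
  have j: "(cCod C (last p), cDom C (hd q)) \<in> R" using junction p q e Q_dom Q_cod by simp
  have pq: "qpath C R (p @ q)" using qpath_app p q j qpath_nonempty by blast
  have c: "cComp Q P' P = cls (p @ q)" using Q_comp p q j by simp
  show "cComp Q P' P \<in> cArr Q" using c pq Q_arr by blast
  have ne: "p \<noteq> []" "q \<noteq> []" using p q qpath_nonempty by auto
  show "cDom Q (cComp Q P' P) = cDom Q P" using c Q_dom[OF pq] Q_dom[OF p(1)] p ne by simp
  show "cCod Q (cComp Q P' P) = cCod Q P'" using c Q_cod[OF pq] Q_cod[OF q(1)] q ne by simp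
next
  fix P assume "P \<in> cArr Q"
  then obtain p where p: "qpath C R p" "P = cls p" using Q_arr by blast
  have d: "cDom Q P = R `` {cDom C (hd p)}" using p Q_dom by simp
  have c: "cCod Q P = R `` {cCod C (last p)}" using p Q_cod by simp
  let ?a = "cDom C (hd p)" and ?b = "cCod C (last p)"
  have a: "?a \<in> cObj C" "?b \<in> cObj C" using qpath_dc_obj qpath_cc_obj p by auto
  have qa: "qpath C R [cId C ?a]" "qpath C R [cId C ?b]" using cat_id[OF cat] a by auto
  have c1: "cComp Q P (cId Q (cDom Q P)) = cls ([cId C ?a] @ p)"
    using d Q_id[OF a(1)] Q_comp[OF qa(1) p(1)] p a cat R_refl by simp
  have s1: "([cId C ?a] @ p, p) \<in> qstep C R"
    using qstep.qstep_id[of C R "[]" ?a p] qpath_app[of "[cId C ?a]" p C R] qa p a cat R_refl qpath_nonempty[OF p(1)]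
    by simp
  show "cComp Q P (cId Q (cDom Q P)) = P"
    using c1 qeq_step[OF s1] class_eq_iff p(2) by simp
  have c2: "cComp Q (cId Q (cCod Q P)) P = cls (p @ [cId C ?b])"
    using c Q_id[OF a(2)] Q_comp[OF p(1) qa(2)] p a cat R_refl by simp
  have s2: "(p @ [cId C ?b], p) \<in> qstep C R"
    using qstep.qstep_id[of C R p ?b "[]"] qpath_app[of p "[cId C ?b]" C R] qa p a cat R_refl qpath_nonempty[OF p(1)]
    by simp
  show "cComp Q (cId Q (cCod Q P)) P = P"
    using c2 qeq_step[OF s2] class_eq_iff p(2) by simp
next
  fix P P' P'' assume P: "P \<in> cArr Q" and P': "P' \<in> cArr Q" and P'': "P'' \<in> cArr Q"
    and e1: "cCod Q P = cDom Q P'" and e2: "cCod Q P' = cDom Q P''"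
  obtain p where p: "qpath C R p" "P = cls p" using P Q_arr by blast
  obtain q where q: "qpath C R q" "P' = cls q" using P' Q_arr by blast
  obtain r where r: "qpath C R r" "P'' = cls r" using P'' Q_arr by blast
  have j1: "(cCod C (last p), cDom C (hd q)) \<in> R" using junction p q e1 Q_dom Q_cod by simp
  have j2: "(cCod C (last q), cDom C (hd r)) \<in> R" using junction q r e2 Q_dom Q_cod by simp
  have pq: "qpath C R (p @ q)" using qpath_app p q j1 qpath_nonempty by blast
  have qr: "qpath C R (q @ r)" using qpath_app q r j2 qpath_nonempty by blast
  have j3: "(cCod C (last (p @ q)), cDom C (hd r)) \<in> R" using j2 qpath_nonempty[OF q(1)] by simp
  have j4: "(cCod C (last p), cDom C (hd (q @ r))) \<in> R" using j1 qpath_nonempty[OF q(1)] by simp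
  show "cComp Q P'' (cComp Q P' P) = cComp Q (cComp Q P'' P') P"
    using Q_comp[OF p(1) q(1) j1] Q_comp[OF q(1) r(1) j2] Q_comp[OF pq r(1) j3] Q_comp[OF p(1) qr j4] p q r
    by simp
qed

end

fun pathv :: "('p, 'n) cat \<Rightarrow> ('m \<Rightarrow> 'n) \<Rightarrow> 'm list \<Rightarrow> 'n" where
  "pathv D Fm [] = undefined"
| "pathv D Fm [f] = Fm f"
| "pathv D Fm (f # g # r) = cComp D (pathv D Fm (g # r)) (Fm f)"

lemma pathv_Cons: "r \<noteq> [] \<Longrightarrow> pathv D Fm (f # r) = cComp D (pathv D Fm r) (Fm f)"
  by (cases r) auto

lemma functor_cat1: "is_functor C D Fo Fm \<Longrightarrow> category C" by (simp add: is_functor_def)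
lemma functor_cat2: "is_functor C D Fo Fm \<Longrightarrow> category D" by (simp add: is_functor_def)
lemma functor_obj: "is_functor C D Fo Fm \<Longrightarrow> a \<in> cObj C \<Longrightarrow> Fo a \<in> cObj D" by (simp add: is_functor_def)
lemma functor_arr: "is_functor C D Fo Fm \<Longrightarrow> f \<in> cArr C \<Longrightarrow> Fm f \<in> cArr D \<and> cDom D (Fm f) = Fo (cDom C f) \<and> cCod D (Fm f) = Fo (cCod C f)"
  by (simp add: is_functor_def)
lemma functor_id: "is_functor C D Fo Fm \<Longrightarrow> a \<in> cObj C \<Longrightarrow> Fm (cId C a) = cId D (Fo a)" by (simp add: is_functor_def)
lemma functor_comp: "is_functor C D Fo Fm \<Longrightarrow> f \<in> cArr C \<Longrightarrow> g \<in> cArr C \<Longrightarrow> cCod C f = cDom C g \<Longrightarrow>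
   Fm (cComp C g f) = cComp D (Fm g) (Fm f)" by (simp add: is_functor_def)

locale qf = qc C R for C :: "('o, 'm) cat" and R +
  fixes D :: "('p, 'n) cat" and Fo :: "'o \<Rightarrow> 'p" and Fm :: "'m \<Rightarrow> 'n"
  assumes F: "is_functor C D Fo Fm" and Fc: "(a, b) \<in> R \<Longrightarrow> Fo a = Fo b"
begin

abbreviation pv where "pv \<equiv> pathv D Fm"

lemma catD: "category D" using F functor_cat2 by blast

lemma pv_props: "qpath C R p \<Longrightarrow> pv p \<in> cArr D \<and> cDom D (pv p) = Fo (cDom C (hd p)) \<and> cCod D (pv p) = Fo (cCod C (last p))"
proof (induction p)
  case Nil then show ?case by (simp add: qpath_def)
next
  case (Cons f r)
  show ?case
  proof (cases "r = []")
    case True then show ?thesis using Cons functor_arr[OF F] by simp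
  next
    case False
    then have h: "f \<in> cArr C" "(cCod C f, cDom C (hd r)) \<in> R" "qpath C R r" using Cons.prems qpath_Cons[OF False, of C R f] by auto
    have IH: "pv r \<in> cArr D \<and> cDom D (pv r) = Fo (cDom C (hd r)) \<and> cCod D (pv r) = Fo (cCod C (last r))"
      using Cons.IH h by simp
    have ff: "Fm f \<in> cArr D" "cDom D (Fm f) = Fo (cDom C f)" "cCod D (Fm f) = Fo (cCod C f)"
      using functor_arr[OF F h(1)] by auto
    have j: "cCod D (Fm f) = cDom D (pv r)" using ff IH Fc[OF h(2)] by simp
    have e: "pv (f # r) = cComp D (pv r) (Fm f)" by (rule pathv_Cons[OF False])
    have "cComp D (pv r) (Fm f) \<in> cArr D" using cat_comp[OF catD ff(1) _ j] IH by blast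
    moreover have "cDom D (cComp D (pv r) (Fm f)) = cDom D (Fm f)" using cat_comp_dom[OF catD ff(1) _ j] IH by blast
    moreover have "cCod D (cComp D (pv r) (Fm f)) = cCod D (pv r)" using cat_comp_cod[OF catD ff(1) _ j] IH by blast
    ultimately show ?thesis using e ff IH False by simp
  qed
qed

lemma pv_app: "x \<noteq> [] \<Longrightarrow> y \<noteq> [] \<Longrightarrow> qpath C R (x @ y) \<Longrightarrow> pv (x @ y) = cComp D (pv y) (pv x)"
proof (induction x)
  case Nil then show ?case by simp
next
  case (Cons f x)
  show ?case
  proof (cases "x = []")
    case True then show ?thesis using Cons pathv_Cons[of y D Fm f] by simp
  next
    case False
    have q: "qpath C R (f # (x @ y))" using Cons by simp
    then have h: "f \<in> cArr C" "(cCod C f, cDom C (hd (x @ y))) \<in> R" "qpath C R (x @ y)"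
      using qpath_Cons[of "x @ y" C R f] False by auto
    have qx: "qpath C R x" "qpath C R y" "(cCod C (last x), cDom C (hd y)) \<in> R"
      using qpath_app[OF False Cons.prems(2)] h(3) by auto
    have IH: "pv (x @ y) = cComp D (pv y) (pv x)" using Cons.IH False Cons.prems h by simp
    have px: "pv x \<in> cArr D" "cDom D (pv x) = Fo (cDom C (hd x))" "cCod D (pv x) = Fo (cCod C (last x))"
      using pv_props[OF qx(1)] by auto
    have py: "pv y \<in> cArr D" "cDom D (pv y) = Fo (cDom C (hd y))"
      using pv_props[OF qx(2)] by auto
    have ff: "Fm f \<in> cArr D" "cCod D (Fm f) = Fo (cCod C f)"
      using functor_arr[OF F h(1)] by auto
    have j1: "cCod D (Fm f) = cDom D (pv x)" using ff px Fc h(2) False by simp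
    have j2: "cCod D (pv x) = cDom D (pv y)" using px py Fc[OF qx(3)] by simp
    have "pv (f # x @ y) = cComp D (pv (x @ y)) (Fm f)" using pathv_Cons[of "x @ y" D Fm f] False by simp
    also have "\<dots> = cComp D (cComp D (pv y) (pv x)) (Fm f)" using IH by simp
    also have "\<dots> = cComp D (pv y) (cComp D (pv x) (Fm f))"
      using cat_assoc[OF catD ff(1) px(1) py(1) j1 j2] by simp
    also have "\<dots> = cComp D (pv y) (pv (f # x))" by (simp only: pathv_Cons[OF False, of D Fm f])
    finally show ?thesis by simp
  qed
qed

lemma pv_mid: assumes "m \<noteq> []" "m' \<noteq> []" "qpath C R (p @ m @ q)" "qpath C R (p @ m' @ q)" "pv m = pv m'"
  shows "pv (p @ m @ q) = pv (p @ m' @ q)"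
proof -
  have A: "pv (m @ q) = pv (m' @ q)"
  proof (cases "q = []")
    case True then show ?thesis using assms by simp
  next
    case False
    have "qpath C R (m @ q)" "qpath C R (m' @ q)" using assms qpath_app3 qpath_app False by (metis append_is_Nil_conv)+
    then show ?thesis using pv_app assms False by simp
  qed
  show ?thesis
  proof (cases "p = []")
    case True then show ?thesis using A by simp
  next
    case False
    then show ?thesis using pv_app[of p "m @ q"] pv_app[of p "m' @ q"] assms A by simp
  qed
qed

lemma pv_step: assumes "(x, y) \<in> qstep C R" shows "pv x = pv y"
  using assms
proof cases
  case (qstep_comp p f g q)
  have qy: "qpath C R y" using qstep_props assms by blast
  have fg: "f \<in> cArr C" "g \<in> cArr C" using qstep_comp(3) qpath_app3[of "[f,g]" C R p q] by auto
  have "pv [f, g] = pv [cComp C g f]" using functor_comp[OF F fg qstep_comp(4)] by simp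
  then show ?thesis using pv_mid[of "[f,g]" "[cComp C g f]" p q] qstep_comp qy by simp
next
  case (qstep_id p a q)
  have qy: "qpath C R y" using qstep_props assms by blast
  have ia: "cId C a \<in> cArr C" "cDom C (cId C a) = a" "cCod C (cId C a) = a"
    using cat qstep_id(4) cat_id by auto
  have Fi: "Fm (cId C a) = cId D (Fo a)" using functor_id[OF F qstep_id(4)] .
  have A: "(p \<noteq> [] \<longrightarrow> qpath C R p \<and> (cCod C (last p), a) \<in> R) \<and>
   (q \<noteq> [] \<longrightarrow> qpath C R q \<and> (a, cDom C (hd q)) \<in> R)"
    using qstep_id(3) qpath_app3[of "[cId C a]" C R p q] ia by simp
  have L: "pv (cId C a # q) = pv q" if "q \<noteq> []"
  proof -
    have pq: "pv q \<in> cArr D" "cDom D (pv q) = Fo a" using pv_props A that Fc by auto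
    have "pv (cId C a # q) = cComp D (pv q) (Fm (cId C a))" by (simp only: pathv_Cons[OF that, of D Fm "cId C a"])
    then show ?thesis using Fi pq cat_idr[OF catD pq(1)] by simp
  qed
  show ?thesis
  proof (cases "p = []")
    case True
    then have "q \<noteq> []" using qstep_id by simp
    then show ?thesis using L qstep_id True by simp
  next
    case False
    show ?thesis
    proof (cases "q = []")
      case True
      have pp: "pv p \<in> cArr D" "cCod D (pv p) = Fo a" using pv_props A False Fc by auto
      have "pv (p @ [cId C a]) = cComp D (pv [cId C a]) (pv p)"
        using pv_app[of p "[cId C a]"] False qstep_id True by simp
      then show ?thesis using Fi pp cat_idl[OF catD pp(1)] qstep_id True by simp
    next
      case qn: False
      have "pv (p @ (cId C a # q)) = cComp D (pv (cId C a # q)) (pv p)"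
        using pv_app[of p "cId C a # q"] False qstep_id by simp
      moreover have "pv (p @ q) = cComp D (pv q) (pv p)" using pv_app[of p q] False qn qy qstep_id by simp
      ultimately show ?thesis using L qn qstep_id by simp
    qed
  qed
qed

lemma pv_qeq: assumes "(x, y) \<in> qeq C R" "qpath C R x" shows "pv x = pv y"
  using assms(1) unfolding qeq_def
proof (induction rule: rtrancl_induct)
  case base then show ?case by simp
next
  case (step y z)
  then show ?case using pv_step by auto
qed

end

definition isid :: "('o, 'm) cat \<Rightarrow> 'm \<Rightarrow> bool" where "isid C f \<longleftrightarrow> f = cId C (cDom C f)"

lemma isid_id: "category C \<Longrightarrow> a \<in> cObj C \<Longrightarrow> isid C (cId C a)" by (simp add: isid_def)
lemma flag_iff_isid: "is_flag C f \<longleftrightarrow> f \<in> cArr C \<and> \<not> isid C f" by (simp add: is_flag_def isid_def)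

lemma ord_arr: "x \<in> cArr (ord_cat n) \<longleftrightarrow> fst x \<le> snd x \<and> snd x < n" by (auto simp: ord_cat_def)
lemma ord_flag: "is_flag (ord_cat n) x \<longleftrightarrow> fst x < snd x \<and> snd x < n"
  by (cases x) (auto simp: ord_cat_def is_flag_def)

lemma nested_rank: assumes "nested_graph C"
  shows "\<exists>(n::nat) Go. (\<forall>a\<in>cObj C. Go a < n) \<and> (\<forall>f\<in>cArr C. Go (cDom C f) \<le> Go (cCod C f)) \<and>
     (\<forall>f\<in>cArr C. \<not> isid C f \<longrightarrow> Go (cDom C f) < Go (cCod C f))"
proof -
  obtain n Go Gm where F: "is_functor C (ord_cat n) Go Gm" and fl: "\<forall>f. is_flag C f \<longrightarrow> is_flag (ord_cat n) (Gm f)"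
    using assms by (auto simp: nested_graph_def)
  have 1: "\<forall>a\<in>cObj C. Go a < n" using functor_obj[OF F] by (auto simp: ord_cat_def)
  have A: "Gm f \<in> cArr (ord_cat n) \<and> fst (Gm f) = Go (cDom C f) \<and> snd (Gm f) = Go (cCod C f)" if "f \<in> cArr C" for f
    using functor_arr[OF F that] by (simp add: ord_cat_def)
  have 2: "\<forall>f\<in>cArr C. Go (cDom C f) \<le> Go (cCod C f)" using A ord_arr by metis
  have 3: "\<forall>f\<in>cArr C. \<not> isid C f \<longrightarrow> Go (cDom C f) < Go (cCod C f)"
    using A fl ord_flag flag_iff_isid by metis
  show ?thesis using 1 2 3 by blast
qed

lemma ord_category: "category (ord_cat n)" unfolding category_def ord_cat_def by auto

lemma rank_nested: fixes Go :: "'o \<Rightarrow> nat" assumes cat: "category C" and A1: "\<forall>a\<in>cObj C. Go a < n"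
  and A2: "\<forall>f\<in>cArr C. Go (cDom C f) \<le> Go (cCod C f)"
  and A3: "\<forall>f\<in>cArr C. \<not> isid C f \<longrightarrow> Go (cDom C f) < Go (cCod C f)"
  shows "nested_graph C"
proof -
  let ?Gm = "\<lambda>f. (Go (cDom C f), Go (cCod C f))"
  have cat2: "category (ord_cat n)" by (rule ord_category)
  have F: "is_functor C (ord_cat n) Go ?Gm"
    unfolding is_functor_def
  proof (intro conjI ballI impI)
    show "category C" "category (ord_cat n)" using cat cat2 by auto
    fix a assume "a \<in> cObj C" then show "Go a \<in> cObj (ord_cat n)" using A1 by (simp add: ord_cat_def)
  next
    fix f assume f: "f \<in> cArr C"
    have 1: "Go (cCod C f) < n" using A1 cat_cod[OF cat f] by blast
    have 2: "Go (cDom C f) \<le> Go (cCod C f)" using A2 f by blast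
    show "?Gm f \<in> cArr (ord_cat n)" using 1 2 by (simp add: ord_cat_def)
    show "cDom (ord_cat n) (?Gm f) = Go (cDom C f)" "cCod (ord_cat n) (?Gm f) = Go (cCod C f)" by (simp_all add: ord_cat_def)
  next
    fix a assume a: "a \<in> cObj C" then show "?Gm (cId C a) = cId (ord_cat n) (Go a)"
      using cat_id_dom[OF cat a] cat_id_cod[OF cat a] by (simp add: ord_cat_def)
  next
    fix f g assume fg: "f \<in> cArr C" "g \<in> cArr C" "cCod C f = cDom C g"
    then show "?Gm (cComp C g f) = cComp (ord_cat n) (?Gm g) (?Gm f)"
      using cat_comp_dom[OF cat fg] cat_comp_cod[OF cat fg] by (simp add: ord_cat_def)
  qed
  have "\<forall>f. is_flag C f \<longrightarrow> is_flag (ord_cat n) (?Gm f)"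
  proof (intro allI impI)
    fix f assume "is_flag C f"
    then have f: "f \<in> cArr C" "\<not> isid C f" by (auto simp: flag_iff_isid)
    have 1: "Go (cCod C f) < n" using A1 cat_cod[OF cat f(1)] by blast
    have 2: "Go (cDom C f) < Go (cCod C f)" using A3 f by blast
    show "is_flag (ord_cat n) (?Gm f)" using 1 2 by (simp add: ord_flag)
  qed
  then show ?thesis unfolding nested_graph_def
    apply (intro conjI cat)
    apply (rule exI[of _ n], rule exI[of _ Go], rule exI[of _ ?Gm])
    using F by blast
qed

lemma nested_comp_id: assumes "nested_graph C" "f \<in> cArr C" "g \<in> cArr C" "cCod C f = cDom C g"
   "isid C (cComp C g f)"
  shows "isid C f \<and> isid C g"
proof -
  have cat: "category C" using assms(1) by (simp add: nested_graph_def)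
  obtain n :: nat and Go where G: "\<forall>a\<in>cObj C. Go a < n" "\<forall>f\<in>cArr C. Go (cDom C f) \<le> Go (cCod C f)"
     "\<forall>f\<in>cArr C. \<not> isid C f \<longrightarrow> Go (cDom C f) < Go (cCod C f)"
    using nested_rank[OF assms(1)] by blast
  have "cCod C (cComp C g f) = cDom C (cComp C g f)"
    using assms(5) cat cat_comp[OF cat assms(2-4)] cat_dom[OF cat] unfolding isid_def by (metis cat_id_cod)
  then have e: "cCod C g = cDom C f" using cat assms by simp
  have "Go (cDom C f) \<le> Go (cCod C f)" "Go (cDom C g) \<le> Go (cCod C g)" using G(2) assms by auto
  then show ?thesis using G(3) assms e by (metis leD order_le_less_trans)
qed

lemma nested_comp_nonid: "nested_graph C \<Longrightarrow> f \<in> cArr C \<Longrightarrow> g \<in> cArr C \<Longrightarrow> cCod C f = cDom C g \<Longrightarrow>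
   \<not> isid C f \<or> \<not> isid C g \<Longrightarrow> \<not> isid C (cComp C g f)"
  using nested_comp_id[of C f g] by blast

definition canon :: "'o rel \<Rightarrow> 'o \<Rightarrow> 'o" where "canon R a = (SOME b. (a, b) \<in> R)"

definition rcons :: "('o, 'm) cat \<Rightarrow> 'm \<Rightarrow> 'm list \<Rightarrow> 'm list" where
  "rcons C f r = (if isid C f then r else if (\<exists>i. r = [i] \<and> isid C i) then [f]
     else if cCod C f = cDom C (hd r) then cComp C (hd r) f # tl r else f # r)"

fun red :: "('o, 'm) cat \<Rightarrow> 'o rel \<Rightarrow> 'm list \<Rightarrow> 'm list" where
  "red C R [] = []"
| "red C R [f] = (if isid C f then [cId C (canon R (cDom C f))] else [f])"
| "red C R (f # g # r) = rcons C f (red C R (g # r))"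

lemma red_Cons: "r \<noteq> [] \<Longrightarrow> red C R (f # r) = rcons C f (red C R r)"
  by (cases r) auto

fun rd :: "('o, 'm) cat \<Rightarrow> 'm list \<Rightarrow> bool" where
  "rd C [] = False"
| "rd C [f] = (f \<in> cArr C \<and> \<not> isid C f)"
| "rd C (f # g # r) = (f \<in> cArr C \<and> \<not> isid C f \<and> cCod C f \<noteq> cDom C g \<and> rd C (g # r))"

lemma rd_Cons: "r \<noteq> [] \<Longrightarrow> rd C (f # r) \<longleftrightarrow> f \<in> cArr C \<and> \<not> isid C f \<and> cCod C f \<noteq> cDom C (hd r) \<and> rd C r"
  by (cases r) auto

lemma rd_hd: "rd C r \<Longrightarrow> hd r \<in> cArr C \<and> \<not> isid C (hd r)"
  by (cases r; cases "tl r") auto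

lemma rd_ne: "rd C r \<Longrightarrow> r \<noteq> []" by auto

lemma rd_all: "rd C r \<Longrightarrow> x \<in> set r \<Longrightarrow> x \<in> cArr C \<and> \<not> isid C x"
  by (induction C r rule: rd.induct) auto

lemma rd_replace_hd: "rd C (a # t) \<Longrightarrow> b \<in> cArr C \<Longrightarrow> \<not> isid C b \<Longrightarrow> cCod C b = cCod C a \<Longrightarrow> rd C (b # t)"
  by (cases t) auto

lemma rd_tl: "rd C (a # t) \<Longrightarrow> t \<noteq> [] \<Longrightarrow> rd C t"
  by (cases t) auto

locale qn = qc +
  assumes nested: "nested_graph C"
begin

abbreviation NF where "NF r \<equiv> (\<exists>c\<in>cObj C. r = [cId C c]) \<or> rd C r"

lemma canon_R: "a \<in> cObj C \<Longrightarrow> (a, canon R a) \<in> R"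
  unfolding canon_def by (rule someI[of _ a]) (rule R_refl)
lemma canon_eq: "(a, b) \<in> R \<Longrightarrow> canon R a = canon R b"
  unfolding canon_def using R_cls by (metis Image_singleton_iff)
lemma canon_obj: "a \<in> cObj C \<Longrightarrow> canon R a \<in> cObj C"
  using canon_R R_obj by blast

lemma NF_not_id: "NF s \<Longrightarrow> \<not> (\<exists>i. s = [i] \<and> isid C i) \<Longrightarrow> rd C s"
  using isid_id[OF cat] by auto

lemma NF_id_ex: "NF s \<Longrightarrow> (\<exists>i. s = [i] \<and> isid C i) \<Longrightarrow> \<exists>c\<in>cObj C. s = [cId C c]"
  by auto

lemma rcons_ok: assumes "qpath C R (f # s)" "NF s"
  shows "NF (rcons C f s) \<and> (f # s, rcons C f s) \<in> qeq C R"
proof -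
  have sne: "s \<noteq> []" using assms(2) by auto
  have f: "f \<in> cArr C" and qs: "qpath C R s" using assms(1) qpath_Cons[OF sne] by auto
  show ?thesis
  proof (cases "isid C f")
    case True
    have fo: "cDom C f \<in> cObj C" using cat_dom[OF cat f] .
    have "(cId C (cDom C f) # s, s) \<in> qstep C R"
      using qstep.qstep_id[of C R "[]" "cDom C f" s] assms(1) True fo sne by (simp add: isid_def)
    then show ?thesis using True assms(2) qeq_step unfolding rcons_def by (simp add: isid_def)
  next
    case nf: False
    show ?thesis
    proof (cases "\<exists>i. s = [i] \<and> isid C i")
      case True
      then obtain i where i: "s = [i]" "isid C i" by blast
      have io: "cDom C i \<in> cObj C" using qs i cat_dom[OF cat] by simp
      have "([f] @ [cId C (cDom C i)] @ [], [f] @ []) \<in> qstep C R"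
        using qstep.qstep_id[of C R "[f]" "cDom C i" "[]"] assms(1) i io by (simp add: isid_def)
      then have "(f # s, [f]) \<in> qeq C R" using i qeq_step by (simp add: isid_def)
      then show ?thesis using True nf f unfolding rcons_def by simp
    next
      case ni: False
      have rs: "rd C s" using NF_not_id assms(2) ni by blast
      show ?thesis
      proof (cases "cCod C f = cDom C (hd s)")
        case True
        obtain h t where ht: "s = h # t" using sne by (cases s) auto
        have h: "h \<in> cArr C" "\<not> isid C h" using rd_hd[OF rs] ht by auto
        have st: "([] @ [f, h] @ t, [] @ [cComp C h f] @ t) \<in> qstep C R"
          using qstep.qstep_comp[of C R "[]" f h t] assms(1) ht True by simp
        have c: "cComp C h f \<in> cArr C" "\<not> isid C (cComp C h f)"
          using cat_comp[OF cat f h(1)] nested_comp_nonid[OF nested f h(1)] True ht nf by auto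
        have cc: "cCod C (cComp C h f) = cCod C h" using cat f h(1) True ht by simp
        have "rd C (cComp C h f # t)" using rd_replace_hd[of C h t] rs ht c cc by simp
        then show ?thesis using st qeq_step nf ni True ht h(2) unfolding rcons_def by simp
      next
        case False
        have "rd C (f # s)" using rd_Cons[OF sne, of C f] f nf False rs by simp
        moreover have "rcons C f s = f # s" unfolding rcons_def using nf ni False by auto
        ultimately show ?thesis by simp
      qed
    qed
  qed
qed

lemma red_nf: "qpath C R p \<Longrightarrow> NF (red C R p) \<and> (p, red C R p) \<in> qeq C R"
proof (induction p)
  case Nil then show ?case by (simp add: qpath_def)
next
  case (Cons f r)
  show ?case
  proof (cases "r = []")
    case True
    then have f: "f \<in> cArr C" using Cons by simp
    have fo: "cDom C f \<in> cObj C" using cat_dom[OF cat f] .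
    show ?thesis
    proof (cases "isid C f")
      case True
      have "([cId C (cDom C f)], [cId C (canon R (cDom C f))]) \<in> qeq C R"
        using id_qeq canon_R fo by blast
      then show ?thesis using True \<open>r = []\<close> canon_obj[OF fo] by (auto simp: isid_def)
    next
      case False then show ?thesis using \<open>r = []\<close> f by simp
    qed
  next
    case False
    have h: "f \<in> cArr C" "(cCod C f, cDom C (hd r)) \<in> R" "qpath C R r" using Cons.prems qpath_Cons[OF False] by auto
    have IH: "NF (red C R r)" "(r, red C R r) \<in> qeq C R" using Cons.IH h by auto
    have qs: "qpath C R (red C R r)" "dc (red C R r) = dc r" using qeq_props[OF IH(2) h(3)] by auto
    have sne: "red C R r \<noteq> []" using IH(1) by auto
    have j: "(cCod C f, cDom C (hd (red C R r))) \<in> R"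
      using h(2) qs(2) R_cls_iff qpath_dc_obj[OF qs(1)] R_sym R_trans by (metis Image_singleton_iff)
    have q2: "qpath C R (f # red C R r)" using qpath_Cons[OF sne, of C R f] h qs j by simp
    have e1: "([f] @ r, [f] @ red C R r) \<in> qeq C R" using qeq_appL[OF IH(2) h(3), of "[f]"] h by simp
    have ok: "NF (rcons C f (red C R r)) \<and> (f # red C R r, rcons C f (red C R r)) \<in> qeq C R"
      using rcons_ok[OF q2 IH(1)] .
    show ?thesis using red_Cons[OF False, of C R f] e1 ok qeq_trans by auto
  qed
qed

end

context qn begin

lemma isid_comp_l: "f \<in> cArr C \<Longrightarrow> g \<in> cArr C \<Longrightarrow> cCod C f = cDom C g \<Longrightarrow> isid C g \<Longrightarrow> cComp C g f = f"
  using cat_idl[OF cat] unfolding isid_def by metis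
lemma isid_comp_r: "f \<in> cArr C \<Longrightarrow> g \<in> cArr C \<Longrightarrow> cCod C f = cDom C g \<Longrightarrow> isid C f \<Longrightarrow> cComp C g f = g"
proof -
  assume a: "f \<in> cArr C" "g \<in> cArr C" "cCod C f = cDom C g" "isid C f"
  have "f = cId C (cDom C f)" using a(4) by (simp add: isid_def)
  moreover have "cCod C f = cDom C f" using a cat_dom[OF cat a(1)] cat_id_cod[OF cat]
    unfolding isid_def by metis
  ultimately have "f = cId C (cDom C g)" using a(3) by simp
  then show ?thesis using cat_idr[OF cat a(2)] by simp
qed

lemma rr: assumes f: "f \<in> cArr C" and g: "g \<in> cArr C" and fg: "cCod C f = cDom C g" and r: "NF r"
  shows "rcons C f (rcons C g r) = rcons C (cComp C g f) r"
proof (cases "isid C g")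
  case True
  have "rcons C g r = r" using True by (simp add: rcons_def)
  moreover have "cComp C g f = f" using isid_comp_l[OF f g fg True] .
  ultimately show ?thesis by simp
next
  case ng: False
  show ?thesis
  proof (cases "isid C f")
    case True
    have "cComp C g f = g" using isid_comp_r[OF f g fg True] .
    then show ?thesis using True by (simp add: rcons_def)
  next
    case nf: False
    have c: "cComp C g f \<in> cArr C" "\<not> isid C (cComp C g f)"
      using cat_comp[OF cat f g fg] nested_comp_nonid[OF nested f g fg] nf by auto
    have cd: "cDom C (cComp C g f) = cDom C f" "cCod C (cComp C g f) = cCod C g" using cat f g fg by auto
    show ?thesis
    proof (cases "\<exists>i. r = [i] \<and> isid C i")
      case True
      have 1: "rcons C g r = [g]" using True ng by (simp add: rcons_def)
      have 2: "rcons C f [g] = [cComp C g f]" using nf ng fg by (simp add: rcons_def)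
      have 3: "rcons C (cComp C g f) r = [cComp C g f]" using True c by (simp add: rcons_def)
      show ?thesis using 1 2 3 by simp
    next
      case ni: False
      have rs: "rd C r" using NF_not_id r ni by blast
      obtain h t where ht: "r = h # t" using rs by (cases r) auto
      have h: "h \<in> cArr C" "\<not> isid C h" using rd_hd[OF rs] ht by auto
      show ?thesis
      proof (cases "cCod C g = cDom C h")
        case True
        have 1: "rcons C g r = cComp C h g # t" unfolding rcons_def using ng ni True ht by auto
        have hg: "cComp C h g \<in> cArr C" "\<not> isid C (cComp C h g)" "cDom C (cComp C h g) = cDom C g"
          using cat_comp[OF cat g h(1) True] nested_comp_nonid[OF nested g h(1) True] ng cat g h(1) True by auto
        have 2: "rcons C f (cComp C h g # t) = cComp C (cComp C h g) f # t"
          unfolding rcons_def using nf hg fg by auto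
        have 3: "rcons C (cComp C g f) r = cComp C h (cComp C g f) # t"
          unfolding rcons_def using c ni True ht cd by auto
        show ?thesis using 1 2 3 cat_assoc[OF cat f g h(1) fg True] by simp
      next
        case False
        have 1: "rcons C g r = g # r" unfolding rcons_def using ng ni False ht by auto
        have 2: "rcons C f (g # r) = cComp C g f # r" unfolding rcons_def using nf ng fg ht by auto
        have 3: "rcons C (cComp C g f) r = cComp C g f # r" unfolding rcons_def using c ni False ht cd by auto
        show ?thesis using 1 2 3 by simp
      qed
    qed
  qed
qed

lemma red_single_pair: assumes f: "f \<in> cArr C" and g: "g \<in> cArr C" and fg: "cCod C f = cDom C g"
  shows "red C R [f, g] = red C R [cComp C g f]"
proof (cases "isid C g")
  case True
  have e: "cComp C g f = f" using isid_comp_l[OF f g fg True] .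
  have go: "cDom C g \<in> cObj C" using cat_dom[OF cat g] .
  have gi: "g = cId C (cDom C g)" using True by (simp add: isid_def)
  have cg: "cCod C g = cDom C g" using gi cat_id_cod[OF cat go] by metis
  have 1: "red C R [f, g] = rcons C f [cId C (canon R (cDom C g))]" using True by simp
  have ii: "isid C (cId C (canon R (cDom C g)))" using isid_id[OF cat canon_obj[OF go]] .
  show ?thesis
  proof (cases "isid C f")
    case True
    have "cDom C f \<in> cObj C" using cat_dom[OF cat f] .
    have "cCod C f = cDom C f" using True cat_id_cod[OF cat] cat_dom[OF cat f] unfolding isid_def by metis
    then show ?thesis using 1 e True fg by (simp add: rcons_def)
  next
    case False
    then show ?thesis using 1 e ii by (simp add: rcons_def)
  qed
next
  case ng: False
  show ?thesis
  proof (cases "isid C f")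
    case True
    then show ?thesis using isid_comp_r[OF f g fg True] ng by (simp add: rcons_def)
  next
    case False
    have "\<not> isid C (cComp C g f)" using nested_comp_nonid[OF nested f g fg] False by blast
    then show ?thesis using False ng fg by (simp add: rcons_def)
  qed
qed

lemma qpath_tl: "qpath C R (a # r) \<Longrightarrow> r \<noteq> [] \<Longrightarrow> qpath C R r"
  using qpath_Cons[of r C R a] by simp

lemma red_comp_step: assumes "qpath C R (p @ [f, g] @ q)" "cCod C f = cDom C g"
  shows "red C R (p @ [f, g] @ q) = red C R (p @ [cComp C g f] @ q)"
  using assms(1)
proof (induction p)
  case Nil
  have fg: "f \<in> cArr C" "g \<in> cArr C" using Nil qpath_app3[of "[f,g]" C R "[]" q] by auto
  show ?case
  proof (cases "q = []")
    case True then show ?thesis using red_single_pair[OF fg assms(2)] by simp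
  next
    case False
    have qq: "qpath C R q" using Nil qpath_app3[of "[f,g]" C R "[]" q] False by auto
    have nf: "NF (red C R q)" using red_nf[OF qq] by blast
    have "red C R (f # g # q) = rcons C f (rcons C g (red C R q))"
      using red_Cons[OF False, of C R g] by simp
    moreover have "red C R (cComp C g f # q) = rcons C (cComp C g f) (red C R q)"
      using red_Cons[OF False, of C R "cComp C g f"] .
    ultimately show ?thesis using rr[OF fg assms(2) nf] by simp
  qed
next
  case (Cons a p)
  have ne: "p @ [f, g] @ q \<noteq> []" "p @ [cComp C g f] @ q \<noteq> []" by auto
  have "qpath C R (p @ [f, g] @ q)" using qpath_tl[of a "p @ [f, g] @ q"] Cons.prems ne by simp
  then have IH: "red C R (p @ [f, g] @ q) = red C R (p @ [cComp C g f] @ q)" using Cons.IH by simp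
  show ?case using red_Cons[OF ne(1), of C R a] red_Cons[OF ne(2), of C R a] IH by simp
qed

lemma red_id_step1: assumes "qpath C R (p @ [cId C a] @ q)" "q \<noteq> []" and ao: "a \<in> cObj C"
  shows "red C R (p @ [cId C a] @ q) = red C R (p @ q)"
  using assms(1)
proof (induction p)
  case Nil
  show ?case using red_Cons[OF assms(2), of C R "cId C a"] isid_id[OF cat ao] by (simp add: rcons_def)
next
  case (Cons b p)
  have ne: "p @ [cId C a] @ q \<noteq> []" "p @ q \<noteq> []" using assms(2) by auto
  have "qpath C R (p @ [cId C a] @ q)" using qpath_tl[of b "p @ [cId C a] @ q"] Cons.prems ne by simp
  then have IH: "red C R (p @ [cId C a] @ q) = red C R (p @ q)" using Cons.IH by simp
  show ?case using red_Cons[OF ne(1), of C R b] red_Cons[OF ne(2), of C R b] IH by simp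
qed

lemma red_id_step2: assumes "qpath C R (p @ [cId C a])" "p \<noteq> []" and ao: "a \<in> cObj C"
  shows "red C R (p @ [cId C a]) = red C R p"
  using assms
proof (induction p)
  case Nil then show ?case by simp
next
  case (Cons b p)
  show ?case
  proof (cases "p = []")
    case True
    have q: "b \<in> cArr C" "(cCod C b, cDom C (cId C a)) \<in> R" "cId C a \<in> cArr C"
      using Cons.prems True by auto
    have ba: "(cCod C b, a) \<in> R" using q(2) ao cat by simp
    have ca: "canon R a = canon R (cCod C b)" using canon_eq[OF ba] by simp
    have ii: "isid C (cId C (canon R a))" using isid_id[OF cat canon_obj[OF ao]] .
    have 1: "red C R [b, cId C a] = rcons C b [cId C (canon R a)]" using isid_id[OF cat ao] cat_id_dom[OF cat ao] by simp
    show ?thesis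
    proof (cases "isid C b")
      case True
      have "cCod C b = cDom C b" using True cat_id_cod[OF cat] cat_dom[OF cat q(1)] unfolding isid_def by metis
      then show ?thesis using 1 True ca \<open>p = []\<close> by (simp add: rcons_def)
    next
      case False
      then show ?thesis using 1 ii \<open>p = []\<close> by (simp add: rcons_def)
    qed
  next
    case False
    have ne: "p @ [cId C a] \<noteq> []" by simp
    have "qpath C R (p @ [cId C a])" using qpath_tl[of b "p @ [cId C a]"] Cons.prems ne by simp
    then have IH: "red C R (p @ [cId C a]) = red C R p" using Cons.IH False ao by simp
    show ?thesis using red_Cons[OF ne, of C R b] red_Cons[OF False, of C R b] IH by simp
  qed
qed

lemma red_step: assumes "(x, y) \<in> qstep C R" shows "red C R x = red C R y"
  using assms
proof cases
  case (qstep_comp p f g q)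
  then show ?thesis using red_comp_step by simp
next
  case (qstep_id p a q)
  show ?thesis
  proof (cases "q = []")
    case True
    then show ?thesis using red_id_step2[of p a] qstep_id by simp
  next
    case False
    then show ?thesis using red_id_step1[of p a q] qstep_id by simp
  qed
qed

lemma red_qeq: assumes "(x, y) \<in> qeq C R" shows "red C R x = red C R y"
  using assms unfolding qeq_def
proof (induction rule: rtrancl_induct)
  case base then show ?case by simp
next
  case (step y z)
  then show ?case using red_step by auto
qed

end

lemma single_app: "[f] = xs @ y # ys \<Longrightarrow> xs = [] \<and> ys = [] \<and> f = y" by (cases xs) auto

context qn begin

lemma rd_red: "rd C t \<Longrightarrow> red C R t = t"
proof (induction t)
  case Nil then show ?case by simp
next
  case (Cons f t)
  show ?case
  proof (cases "t = []")
    case True then show ?thesis using Cons by simp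
  next
    case False
    have h: "f \<in> cArr C" "\<not> isid C f" "cCod C f \<noteq> cDom C (hd t)" "rd C t" using Cons.prems rd_Cons[OF False, of C f] by auto
    have "red C R t = t" using Cons.IH h by simp
    moreover have "\<not> isid C (hd t)" using rd_hd[OF h(4)] by simp
    ultimately show ?thesis using red_Cons[OF False, of C R f] h False unfolding rcons_def
      by (cases t) auto
  qed
qed

lemma red_app_rd: assumes "rd C s" "rd C t"
  shows "red C R (s @ t) = (if cCod C (last s) = cDom C (hd t) then butlast s @ [cComp C (hd t) (last s)] @ tl t else s @ t)"
  using assms(1)
proof (induction s)
  case Nil then show ?case by simp
next
  case (Cons a s)
  have tne: "t \<noteq> []" using assms(2) by auto
  have th: "hd t \<in> cArr C" "\<not> isid C (hd t)" using rd_hd[OF assms(2)] by auto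
  show ?case
  proof (cases "s = []")
    case True
    have a: "a \<in> cArr C" "\<not> isid C a" using Cons.prems True by auto
    have nsi: "\<not> (\<exists>i. t = [i] \<and> isid C i)" using th by auto
    have "red C R (a # t) = rcons C a t" using red_Cons[OF tne, of C R a] rd_red[OF assms(2)] by simp
    then show ?thesis using True a nsi tne unfolding rcons_def by (cases t) auto
  next
    case False
    have h: "a \<in> cArr C" "\<not> isid C a" "cCod C a \<noteq> cDom C (hd s)" "rd C s" using Cons.prems rd_Cons[OF False, of C a] by auto
    let ?W = "if cCod C (last s) = cDom C (hd t) then butlast s @ [cComp C (hd t) (last s)] @ tl t else s @ t"
    have IH: "red C R (s @ t) = ?W" using Cons.IH h by simp
    have W: "?W \<noteq> [] \<and> cDom C (hd ?W) = cDom C (hd s) \<and> \<not> isid C (hd ?W)"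
    proof (cases "cCod C (last s) = cDom C (hd t)")
      case ex: True
      have ls: "last s \<in> cArr C" "\<not> isid C (last s)" using rd_all[OF h(4)] False by auto
      have c: "\<not> isid C (cComp C (hd t) (last s))" "cDom C (cComp C (hd t) (last s)) = cDom C (last s)"
        using nested_comp_nonid[OF nested ls(1) th(1) ex] ls cat th ex by auto
      have sb: "s = butlast s @ [last s]" using append_butlast_last_id[OF False] by simp
      show ?thesis
      proof (cases "butlast s = []")
        case True
        have hs: "hd s = last s" using sb True by (metis append_Nil list.sel(1))
        have "?W = cComp C (hd t) (last s) # tl t" using ex True by simp
        then show ?thesis using c hs by simp
      next
        case bne: False
        have hb: "hd (butlast s) = hd s" using sb bne by (metis hd_append2)
        have "\<not> isid C (hd s)" using rd_hd[OF h(4)] by simp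
        moreover have "hd ?W = hd s" using ex bne hb by simp
        ultimately show ?thesis using ex bne by simp
      qed
    next
      case False
      then show ?thesis using \<open>s \<noteq> []\<close> rd_hd[OF h(4)] by simp
    qed
    have nsi: "\<not> (\<exists>i. ?W = [i] \<and> isid C i)" using W by auto
    have "red C R (a # s @ t) = rcons C a ?W" using red_Cons[of "s @ t" C R a] IH False by simp
    also have "\<dots> = a # ?W" unfolding rcons_def using h nsi W by auto
    finally show ?thesis using False by simp
  qed
qed

lemma red_single: "f \<in> cArr C \<Longrightarrow> \<not> isid C f \<Longrightarrow> red C R [f] = [f]" by simp

lemma flag_iff: assumes p: "qpath C R p" shows "is_flag Q (cls p) \<longleftrightarrow> rd C (red C R p)"
proof -
  let ?d = "cDom C (hd p)"
  have d: "?d \<in> cObj C" using qpath_dc_obj[OF p] .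
  have idc: "cId Q (cDom Q (cls p)) = cls [cId C ?d]" using Q_dom[OF p] Q_id[OF d] by simp
  have arr: "cls p \<in> cArr Q" using Q_arr p by blast
  have "cls p = cls [cId C ?d] \<longleftrightarrow> \<not> rd C (red C R p)"
  proof
    assume "cls p = cls [cId C ?d]"
    then have "(p, [cId C ?d]) \<in> qeq C R" using class_eq_iff by blast
    then have "red C R p = red C R [cId C ?d]" using red_qeq by blast
    also have "\<dots> = [cId C (canon R ?d)]" using isid_id[OF cat d] cat_id_dom[OF cat d] by simp
    finally show "\<not> rd C (red C R p)" using isid_id[OF cat canon_obj[OF d]] by simp
  next
    assume nr: "\<not> rd C (red C R p)"
    have n: "NF (red C R p)" "(p, red C R p) \<in> qeq C R" using red_nf[OF p] by auto
    then obtain c where c: "c \<in> cObj C" "red C R p = [cId C c]" using nr by blast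
    have "dc (red C R p) = dc p" using qeq_props[OF n(2) p] by simp
    then have "R `` {c} = R `` {?d}" using c cat by simp
    then have "(c, ?d) \<in> R" using R_cls_iff c(1) by blast
    then have "([cId C c], [cId C ?d]) \<in> qeq C R" using id_qeq by blast
    then have "(p, [cId C ?d]) \<in> qeq C R" using n(2) c(2) qeq_trans by metis
    then show "cls p = cls [cId C ?d]" using class_eq_iff by blast
  qed
  then show ?thesis using idc arr unfolding is_flag_def by auto
qed

lemma cls_single_comp: assumes "f \<in> cArr C" "g \<in> cArr C" "cCod C f = cDom C g"
  shows "cls [cComp C g f] = cComp Q (cls [g]) (cls [f])"
proof -
  have q: "qpath C R [f]" "qpath C R [g]" using assms by auto
  have j: "(cCod C (last [f]), cDom C (hd [g])) \<in> R" using assms R_refl cat_cod[OF cat assms(1)] by simp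
  have "cComp Q (cls [g]) (cls [f]) = cls [f, g]" using Q_comp[OF q j] by simp
  moreover have "([] @ [f, g] @ [], [] @ [cComp C g f] @ []) \<in> qstep C R"
    using qstep.qstep_comp[of C R "[]" f g "[]"] assms R_refl[OF cat_dom[OF cat assms(2)]] by simp
  then have "cls [f, g] = cls [cComp C g f]" using qeq_step class_eq_iff by simp
  ultimately show ?thesis by simp
qed

lemma irr_to_Q: assumes "irreducible_flag C f" shows "irreducible_flag Q (cls [f])"
proof -
  have f: "f \<in> cArr C" "\<not> isid C f" using assms by (auto simp: irreducible_flag_def flag_iff_isid)
  have qf: "qpath C R [f]" using f by simp
  have fl: "is_flag Q (cls [f])" using flag_iff[OF qf] f by simp
  have "\<not> (\<exists>G H. is_flag Q G \<and> is_flag Q H \<and> cCod Q H = cDom Q G \<and> cls [f] = cComp Q G H)"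
  proof
    assume "\<exists>G H. is_flag Q G \<and> is_flag Q H \<and> cCod Q H = cDom Q G \<and> cls [f] = cComp Q G H"
    then obtain G H where GH: "is_flag Q G" "is_flag Q H" "cCod Q H = cDom Q G" "cls [f] = cComp Q G H" by blast
    obtain g where g: "qpath C R g" "G = cls g" using GH(1) Q_arr unfolding is_flag_def by blast
    obtain h where h: "qpath C R h" "H = cls h" using GH(2) Q_arr unfolding is_flag_def by blast
    let ?s = "red C R h" and ?t = "red C R g"
    have rs: "rd C ?s" "rd C ?t" using flag_iff[OF g(1)] flag_iff[OF h(1)] g(2) h(2) GH(1,2) by auto
    have hs: "(h, ?s) \<in> qeq C R" "(g, ?t) \<in> qeq C R" using red_nf h g by auto
    have j: "(cCod C (last h), cDom C (hd g)) \<in> R" using junction h(1) GH(3) Q_dom[OF g(1)] Q_cod[OF h(1)] g h by simp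
    have "cComp Q G H = cls (h @ g)" using Q_comp[OF h(1) g(1) j] g h by simp
    moreover have "(h @ g, ?s @ ?t) \<in> qeq C R" using qeq_app2[OF hs h(1) g(1) j] .
    ultimately have "cls [f] = cls (h @ g)" using GH(4) by simp
    then have "([f], h @ g) \<in> qeq C R" using class_eq_iff by blast
    then have "([f], ?s @ ?t) \<in> qeq C R" using qeq_trans \<open>(h @ g, ?s @ ?t) \<in> qeq C R\<close> by blast
    then have "red C R [f] = red C R (?s @ ?t)" by (rule red_qeq)
    then have e: "[f] = red C R (?s @ ?t)" using red_single[OF f] by simp
    show False
    proof (cases "cCod C (last ?s) = cDom C (hd ?t)")
      case True
      then have e2: "[f] = butlast ?s @ [cComp C (hd ?t) (last ?s)] @ tl ?t" using e red_app_rd[OF rs] by simp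
      then have "[f] = butlast ?s @ cComp C (hd ?t) (last ?s) # tl ?t" by simp
      from single_app[OF this] have b: "butlast ?s = []" "tl ?t = []" by auto
      have ls: "last ?s \<in> cArr C" "\<not> isid C (last ?s)" using rd_all[OF rs(1)] rd_ne[OF rs(1)] by auto
      have ht: "hd ?t \<in> cArr C" "\<not> isid C (hd ?t)" using rd_hd[OF rs(2)] by auto
      have fe: "f = cComp C (hd ?t) (last ?s)" using e2 b by simp
      have "\<exists>g h. is_flag C g \<and> is_flag C h \<and> cCod C h = cDom C g \<and> f = cComp C g h"
        apply (rule exI[of _ "hd ?t"], rule exI[of _ "last ?s"])
        using fe ls ht True by (simp add: flag_iff_isid)
      then show False using assms unfolding irreducible_flag_def by blast
    next
      case False
      then have "[f] = ?s @ ?t" using e red_app_rd[OF rs] by simp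
      then show False using rd_ne[OF rs(1)] rd_ne[OF rs(2)] by (cases ?s) auto
    qed
  qed
  then show ?thesis using fl unfolding irreducible_flag_def by blast
qed

end
context qn begin
lemma irr_from_Q: assumes "irreducible_flag Q P" shows "\<exists>f. irreducible_flag C f \<and> P = cls [f]"
proof -
  have fl: "is_flag Q P" using assms by (simp add: irreducible_flag_def)
  obtain p where p: "qpath C R p" "P = cls p" using fl Q_arr unfolding is_flag_def by blast
  let ?s = "red C R p"
  have rs: "rd C ?s" using flag_iff[OF p(1)] p(2) fl by simp
  have ps: "(p, ?s) \<in> qeq C R" using red_nf p by auto
  have qs: "qpath C R ?s" using qeq_props[OF ps p(1)] by simp
  have Ps: "P = cls ?s" using p(2) class_eq_iff[of p ?s] ps by simp
  obtain f s' where fs: "?s = f # s'" using rd_ne[OF rs] by (cases ?s) auto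
  have s'e: "s' = []"
  proof (rule ccontr)
    assume ne: "s' \<noteq> []"
    have h: "f \<in> cArr C" "\<not> isid C f" "rd C s'" using rs fs rd_Cons[OF ne, of C f] by auto
    have q: "qpath C R [f]" "qpath C R s'" "(cCod C f, cDom C (hd s')) \<in> R"
      using qs fs qpath_Cons[OF ne, of C R f] by auto
    have "cComp Q (cls s') (cls [f]) = cls ([f] @ s')" using Q_comp[OF q(1) q(2)] q(3) by simp
    then have "P = cComp Q (cls s') (cls [f])" using Ps fs by simp
    moreover have "is_flag Q (cls [f])" using flag_iff[OF q(1)] h by simp
    moreover have "is_flag Q (cls s')" using flag_iff[OF q(2)] h rd_red by simp
    moreover have "cCod Q (cls [f]) = cDom Q (cls s')" using Q_cod[OF q(1)] Q_dom[OF q(2)] R_cls[OF q(3)] by simp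
    ultimately have "\<exists>G H. is_flag Q G \<and> is_flag Q H \<and> cCod Q H = cDom Q G \<and> P = cComp Q G H"
      by blast
    then show False using assms unfolding irreducible_flag_def by blast
  qed
  have "rd C [f]" using rs fs s'e by simp
  then have f: "f \<in> cArr C" "\<not> isid C f" by simp_all
  have "irreducible_flag C f"
    unfolding irreducible_flag_def
  proof (intro conjI notI)
    show "is_flag C f" using f by (simp add: flag_iff_isid)
    assume "\<exists>g h. is_flag C g \<and> is_flag C h \<and> cCod C h = cDom C g \<and> f = cComp C g h"
    then obtain g h where gh: "is_flag C g" "is_flag C h" "cCod C h = cDom C g" "f = cComp C g h" by blast
    have g: "g \<in> cArr C" "\<not> isid C g" using gh(1) by (simp_all add: flag_iff_isid)
    have h: "h \<in> cArr C" "\<not> isid C h" using gh(2) by (simp_all add: flag_iff_isid)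
    have "P = cComp Q (cls [g]) (cls [h])" using cls_single_comp[OF h(1) g(1) gh(3)] Ps fs s'e gh(4) by simp
    moreover have "is_flag Q (cls [g])" "is_flag Q (cls [h])" using flag_iff[of "[g]"] flag_iff[of "[h]"] g h by auto
    moreover have "cCod Q (cls [h]) = cDom Q (cls [g])" using Q_cod[of "[h]"] Q_dom[of "[g]"] g h gh(3) by simp
    ultimately have "\<exists>G H. is_flag Q G \<and> is_flag Q H \<and> cCod Q H = cDom Q G \<and> P = cComp Q G H"
      by blast
    then show False using assms unfolding irreducible_flag_def by blast
  qed
  moreover have "P = cls [f]" using Ps fs s'e by simp
  ultimately show ?thesis by blast
qed

end

lemma gen_mono: "x \<in> generated_arrows D S \<Longrightarrow> S \<subseteq> T \<Longrightarrow> x \<in> generated_arrows D T"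
proof (induction rule: generated_arrows.induct)
  case (gen_base f) then show ?case by (auto intro: generated_arrows.gen_base)
next
  case (gen_comp f g) then show ?case by (auto intro: generated_arrows.gen_comp)
qed

lemma sub_cat: assumes cC: "category C"
  and d: "\<And>f. f \<in> T \<Longrightarrow> f \<in> cArr C \<and> cDom C f \<in> S \<and> cCod C f \<in> S"
  and i: "\<And>a. a \<in> S \<Longrightarrow> a \<in> cObj C \<and> cId C a \<in> T"
  and c: "\<And>f g. f \<in> T \<Longrightarrow> g \<in> T \<Longrightarrow> cCod C f = cDom C g \<Longrightarrow> cComp C g f \<in> T"
  shows "category \<lparr>cObj = S, cArr = T, cDom = cDom C, cCod = cCod C, cId = cId C, cComp = cComp C\<rparr>"
  unfolding category_def
proof (simp only: cat.simps, intro conjI ballI impI)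
  fix f assume "f \<in> T" then show "cDom C f \<in> S" "cCod C f \<in> S" using d by auto
next
  fix a assume a: "a \<in> S" then show "cId C a \<in> T" using i by blast
  show "cDom C (cId C a) = a" "cCod C (cId C a) = a" using i[OF a] cC by auto
next
  fix f g assume f: "f \<in> T" and g: "g \<in> T" and fg: "cCod C f = cDom C g"
  show "cComp C g f \<in> T" using c f g fg by blast
  show "cDom C (cComp C g f) = cDom C f" "cCod C (cComp C g f) = cCod C g" using d[OF f] d[OF g] fg cC by auto
next
  fix f assume "f \<in> T"
  then show "cComp C f (cId C (cDom C f)) = f" "cComp C (cId C (cCod C f)) f = f" using d cat_idl[OF cC] cat_idr[OF cC] by auto
next
  fix f g h assume "f \<in> T" "g \<in> T" "h \<in> T" "cCod C f = cDom C g" "cCod C g = cDom C h"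
  then show "cComp C h (cComp C g f) = cComp C (cComp C h g) f" using d cat_assoc[OF cC] by auto
qed

lemma fiber_cat: assumes F: "is_functor C D Fo Fm" and A: "A \<in> cObj D"
  shows "category (fiber C D Fo Fm A)"
  unfolding fiber_def
proof (rule sub_cat)
  have cC: "category C" and cD: "category D" using F by (auto simp: is_functor_def)
  show "category C" by (rule cC)
  fix f assume "f \<in> {f \<in> cArr C. Fm f = cId D A}"
  then have f1: "f \<in> cArr C" "Fm f = cId D A" by auto
  have "cDom D (Fm f) = A" "cCod D (Fm f) = A" using cD A f1 by auto
  moreover have "cDom D (Fm f) = Fo (cDom C f)" "cCod D (Fm f) = Fo (cCod C f)" using functor_arr[OF F f1(1)] by auto
  ultimately show "f \<in> cArr C \<and> cDom C f \<in> {a \<in> cObj C. Fo a = A} \<and> cCod C f \<in> {a \<in> cObj C. Fo a = A}"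
    using cat_dom[OF cC f1(1)] cat_cod[OF cC f1(1)] f1 by auto
next
  have cC: "category C" using F by (auto simp: is_functor_def)
  fix a assume "a \<in> {a \<in> cObj C. Fo a = A}"
  then show "a \<in> cObj C \<and> cId C a \<in> {f \<in> cArr C. Fm f = cId D A}" using cat_id[OF cC] functor_id[OF F] by auto
next
  have cD: "category D" using F by (auto simp: is_functor_def)
  fix f g assume f: "f \<in> {f \<in> cArr C. Fm f = cId D A}" and g: "g \<in> {f \<in> cArr C. Fm f = cId D A}"
    and fg: "cCod C f = cDom C g"
  have cC: "category C" using F by (auto simp: is_functor_def)
  have "Fm (cComp C g f) = cComp D (cId D A) (cId D A)" using functor_comp[OF F _ _ fg] f g by auto
  also have "\<dots> = cId D A" using cat_idl[OF cD cat_id[OF cD A]] cD A by simp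
  finally show "cComp C g f \<in> {f \<in> cArr C. Fm f = cId D A}" using cat_comp[OF cC _ _ fg] f g by auto
qed

context qn begin

definition muo where "muo a = R `` {a}"
definition mum where "mum f = cls [f]"

lemma proj_functor: "is_functor C Q muo mum"
  unfolding is_functor_def
proof (intro conjI ballI impI)
  show "category C" by (rule cat)
  show "category Q" by (rule Q_cat)
  fix a assume "a \<in> cObj C" then show "muo a \<in> cObj Q" unfolding muo_def Q_obj by (rule quotientI)
next
  fix f assume f: "f \<in> cArr C"
  then have q: "qpath C R [f]" by simp
  show "mum f \<in> cArr Q" unfolding mum_def Q_arr using q by blast
  show "cDom Q (mum f) = muo (cDom C f)" "cCod Q (mum f) = muo (cCod C f)"
    unfolding mum_def muo_def using Q_dom[OF q] Q_cod[OF q] by auto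
next
  fix a assume "a \<in> cObj C" then show "mum (cId C a) = cId Q (muo a)" unfolding mum_def muo_def using Q_id by simp
next
  fix f g assume "f \<in> cArr C" "g \<in> cArr C" "cCod C f = cDom C g"
  then show "mum (cComp C g f) = cComp Q (mum g) (mum f)" unfolding mum_def using cls_single_comp by simp
qed

lemma proj_epi: "epi_functor C Q muo mum"
  unfolding epi_functor_def
proof (intro conjI subsetI)
  show "is_functor C Q muo mum" by (rule proj_functor)
  fix P assume "P \<in> cArr Q"
  then obtain p where p: "qpath C R p" "P = cls p" using Q_arr by blast
  have "qpath C R p \<Longrightarrow> cls p \<in> generated_arrows Q (mum ` cArr C)"
  proof (induction p)
    case Nil then show ?case by (simp add: qpath_def)
  next
    case (Cons f r)
    show ?case
    proof (cases "r = []")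
      case True
      then have "cls (f # r) = mum f" "f \<in> cArr C" using Cons by (auto simp: mum_def)
      then show ?thesis by (auto intro: generated_arrows.gen_base)
    next
      case False
      have h: "f \<in> cArr C" "(cCod C f, cDom C (hd r)) \<in> R" "qpath C R r"
        using Cons.prems qpath_Cons[OF False, of C R f] by auto
      have 1: "cls [f] \<in> generated_arrows Q (mum ` cArr C)" using h(1) by (auto simp: mum_def intro: generated_arrows.gen_base)
      have 2: "cls r \<in> generated_arrows Q (mum ` cArr C)" using Cons.IH h(3) by simp
      have qf: "qpath C R [f]" using h(1) by simp
      have 3: "cCod Q (cls [f]) = cDom Q (cls r)" using Q_cod[OF qf] Q_dom[OF h(3)] R_cls[OF h(2)] by simp
      have "cComp Q (cls r) (cls [f]) = cls (f # r)" using Q_comp[OF qf h(3)] h(2) by simp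
      then show ?thesis using generated_arrows.gen_comp[OF 1 2 3] by simp
    qed
  qed
  then show "P \<in> generated_arrows Q (mum ` cArr C)" using p by simp
qed

lemma proj_quotient: "is_quotient C Q muo mum"
  unfolding is_quotient_def
proof (intro exI conjI)
  show "equiv (cObj C) R" by (rule eqv)
  show "iso_functor Q Q id id" unfolding iso_functor_def is_functor_def using Q_cat by (auto simp: bij_betw_def)
  show "\<forall>a\<in>cObj C. id (R `` {a}) = muo a" by (simp add: muo_def)
  show "\<forall>f\<in>cArr C. id (cls [f]) = mum f" by (simp add: mum_def)
qed

lemma proj_admissible: "admissible C Q muo mum"
  unfolding admissible_def
proof (intro conjI allI impI)
  show "is_functor C Q muo mum" by (rule proj_functor)
  fix f assume "irreducible_flag C f"
  then show "contracts C Q muo mum f \<or> irreducible_flag Q (mum f)" using irr_to_Q by (simp add: mum_def)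
next
  fix f g assume f: "irreducible_flag C f" and c: "contracts C Q muo mum f"
  have "is_flag Q (cls [f])" using irr_to_Q[OF f] by (simp add: irreducible_flag_def)
  moreover have "f \<in> cArr C" using f by (simp add: irreducible_flag_def is_flag_def)
  ultimately have "\<not> contracts C Q muo mum f"
    unfolding contracts_def is_flag_def mum_def muo_def using Q_dom[of "[f]"] by simp
  then show "contracts C Q muo mum g" using c by blast
qed

lemma proj_merger: "merger C Q muo mum"
  unfolding merger_def using proj_admissible proj_epi proj_quotient by blast

lemma Q_nested: fixes rk :: "_ \<Rightarrow> nat"
  assumes b: "\<forall>a\<in>cObj C. rk a < n" and m: "\<forall>f\<in>cArr C. rk (cDom C f) \<le> rk (cCod C f)"
  and s: "\<forall>f\<in>cArr C. \<not> isid C f \<longrightarrow> rk (cDom C f) < rk (cCod C f)"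
  and c: "\<And>a b. (a, b) \<in> R \<Longrightarrow> rk a = rk b"
  shows "nested_graph Q"
proof -
  let ?G = "\<lambda>X. rk (SOME a. a \<in> X)"
  have G: "?G (R `` {a}) = rk a" if "a \<in> cObj C" for a
  proof -
    have "(SOME b. b \<in> R `` {a}) \<in> R `` {a}" by (rule someI[of _ a]) (simp add: R_refl that)
    then show ?thesis using c by simp
  qed
  have pm: "qpath C R p \<Longrightarrow> rk (cDom C (hd p)) \<le> rk (cCod C (last p)) \<and> (rd C p \<longrightarrow> rk (cDom C (hd p)) < rk (cCod C (last p)))" for p
  proof (induction p)
    case Nil then show ?case by (simp add: qpath_def)
  next
    case (Cons f r)
    show ?case
    proof (cases "r = []")
      case True then show ?thesis using Cons m s by simp
    next
      case False
      have h: "f \<in> cArr C" "(cCod C f, cDom C (hd r)) \<in> R" "qpath C R r"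
        using Cons.prems qpath_Cons[OF False, of C R f] by auto
      have IH: "rk (cDom C (hd r)) \<le> rk (cCod C (last r))" "rd C r \<longrightarrow> rk (cDom C (hd r)) < rk (cCod C (last r))"
        using Cons.IH h by auto
      have e: "rk (cCod C f) = rk (cDom C (hd r))" using c h(2) by blast
      have "rk (cDom C f) \<le> rk (cCod C f)" using m h(1) by blast
      moreover have "rd C (f # r) \<longrightarrow> rk (cDom C f) < rk (cCod C f)"
        using s h(1) rd_Cons[OF False, of C f] by blast
      moreover have "rd C (f # r) \<longrightarrow> rd C r" using rd_Cons[OF False, of C f] by blast
      ultimately show ?thesis using IH e False by auto
    qed
  qed
  show ?thesis
  proof (rule rank_nested[of Q ?G n])
    show "category Q" by (rule Q_cat)
    show "\<forall>X\<in>cObj Q. ?G X < n"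
    proof
      fix X assume "X \<in> cObj Q"
      then obtain a where a: "a \<in> cObj C" "X = R `` {a}" unfolding Q_obj by (rule quotientE)
      then show "?G X < n" using G b by simp
    qed
    show "\<forall>P\<in>cArr Q. ?G (cDom Q P) \<le> ?G (cCod Q P)"
    proof
      fix P assume "P \<in> cArr Q"
      then obtain p where p: "qpath C R p" "P = cls p" using Q_arr by blast
      show "?G (cDom Q P) \<le> ?G (cCod Q P)"
        using p Q_dom[OF p(1)] Q_cod[OF p(1)] G[OF qpath_dc_obj[OF p(1)]] G[OF qpath_cc_obj[OF p(1)]] pm[OF p(1)] by simp
    qed
    show "\<forall>P\<in>cArr Q. \<not> isid Q P \<longrightarrow> ?G (cDom Q P) < ?G (cCod Q P)"
    proof (intro ballI impI)
      fix P assume P: "P \<in> cArr Q" "\<not> isid Q P"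
      then obtain p where p: "qpath C R p" "P = cls p" using Q_arr by blast
      have "is_flag Q P" using P by (simp add: flag_iff_isid)
      then have r: "rd C (red C R p)" using flag_iff[OF p(1)] p(2) by simp
      have ps: "(p, red C R p) \<in> qeq C R" using red_nf[OF p(1)] by simp
      have qs: "qpath C R (red C R p)" "dc (red C R p) = dc p" "cc (red C R p) = cc p" using qeq_props[OF ps p(1)] by auto
      have "P = cls (red C R p)" using p(2) class_eq_iff[of p] ps by simp
      then show "?G (cDom Q P) < ?G (cCod Q P)"
        using Q_dom[OF qs(1)] Q_cod[OF qs(1)] G[OF qpath_dc_obj[OF qs(1)]] G[OF qpath_cc_obj[OF qs(1)]] pm[OF qs(1)] r
        by simp
    qed
  qed
qed

end

context qf begin

definition kao where "kao X = Fo (SOME a. a \<in> X)"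
definition kam where "kam P = pv (SOME p. p \<in> P)"

lemma kao_cls: "a \<in> cObj C \<Longrightarrow> kao (R `` {a}) = Fo a"
proof -
  assume a: "a \<in> cObj C"
  have "(SOME b. b \<in> R `` {a}) \<in> R `` {a}" by (rule someI[of _ a]) (simp add: R_refl a)
  then show ?thesis unfolding kao_def using Fc by simp
qed

lemma kam_cls: "qpath C R p \<Longrightarrow> kam (cls p) = pv p"
  unfolding kam_def using some_cls(1) pv_qeq by metis

lemma induced_functor: "is_functor Q D kao kam"
  unfolding is_functor_def
proof (intro conjI ballI impI)
  show "category Q" by (rule Q_cat)
  show "category D" by (rule catD)
  fix X assume "X \<in> cObj Q"
  then obtain a where a: "a \<in> cObj C" "X = R `` {a}" unfolding Q_obj by (rule quotientE)
  then show "kao X \<in> cObj D" using kao_cls functor_obj[OF F] by simp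
next
  fix P assume "P \<in> cArr Q"
  then obtain p where p: "qpath C R p" "P = cls p" using Q_arr by blast
  have pv: "pv p \<in> cArr D \<and> cDom D (pv p) = Fo (cDom C (hd p)) \<and> cCod D (pv p) = Fo (cCod C (last p))"
    using pv_props[OF p(1)] .
  show "kam P \<in> cArr D" "cDom D (kam P) = kao (cDom Q P)" "cCod D (kam P) = kao (cCod Q P)"
    using p kam_cls pv Q_dom[OF p(1)] Q_cod[OF p(1)] kao_cls qpath_dc_obj[OF p(1)] qpath_cc_obj[OF p(1)] by auto
next
  fix X assume "X \<in> cObj Q"
  then obtain a where a: "a \<in> cObj C" "X = R `` {a}" unfolding Q_obj by (rule quotientE)
  have qa: "qpath C R [cId C a]" using cat_id[OF cat a(1)] by simp
  show "kam (cId Q X) = cId D (kao X)"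
    using a Q_id[OF a(1)] kam_cls[OF qa] functor_id[OF F a(1)] kao_cls[OF a(1)] by simp
next
  fix P P' assume P: "P \<in> cArr Q" and P': "P' \<in> cArr Q" and e: "cCod Q P = cDom Q P'"
  obtain p where p: "qpath C R p" "P = cls p" using P Q_arr by blast
  obtain q where q: "qpath C R q" "P' = cls q" using P' Q_arr by blast
  have j: "(cCod C (last p), cDom C (hd q)) \<in> R" using junction p q e Q_dom Q_cod by simp
  have pq: "qpath C R (p @ q)" using qpath_app p q j qpath_nonempty by blast
  have "cComp Q P' P = cls (p @ q)" using Q_comp p q j by simp
  then show "kam (cComp Q P' P) = cComp D (kam P') (kam P)"
    using kam_cls[OF pq] kam_cls[OF p(1)] kam_cls[OF q(1)] p q pv_app[OF qpath_nonempty[OF p(1)] qpath_nonempty[OF q(1)] pq] by simp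
qed

end

lemma fiber_nested: assumes N: "nested_graph C" and F: "is_functor C D Fo Fm" and A: "A \<in> cObj D"
  shows "nested_graph (fiber C D Fo Fm A)"
proof -
  obtain n :: nat and Go where G: "\<forall>a\<in>cObj C. Go a < n" "\<forall>f\<in>cArr C. Go (cDom C f) \<le> Go (cCod C f)"
     "\<forall>f\<in>cArr C. \<not> isid C f \<longrightarrow> Go (cDom C f) < Go (cCod C f)"
    using nested_rank[OF N] by blast
  show ?thesis
  proof (rule rank_nested[of _ Go n])
    show "category (fiber C D Fo Fm A)" using fiber_cat[OF F A] .
    show "\<forall>a\<in>cObj (fiber C D Fo Fm A). Go a < n" using G(1) by (simp add: fiber_def)
    show "\<forall>f\<in>cArr (fiber C D Fo Fm A). Go (cDom (fiber C D Fo Fm A) f) \<le> Go (cCod (fiber C D Fo Fm A) f)"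
      using G(2) by (simp add: fiber_def)
    show "\<forall>f\<in>cArr (fiber C D Fo Fm A). \<not> isid (fiber C D Fo Fm A) f \<longrightarrow> Go (cDom (fiber C D Fo Fm A) f) < Go (cCod (fiber C D Fo Fm A) f)"
      using G(3) by (simp add: fiber_def isid_def)
  qed
qed

lemma gen_dom: assumes F: "is_functor C D Fo Fm" and g: "g \<in> generated_arrows D (Fm ` cArr C)"
  shows "g \<in> cArr D \<and> (\<exists>a\<in>cObj C. cDom D g = Fo a)"
  using g
proof (induction rule: generated_arrows.induct)
  case (gen_base f)
  then obtain h where h: "h \<in> cArr C" "f = Fm h" by blast
  have cC: "category C" using F by (simp add: is_functor_def)
  then show ?case using functor_arr[OF F h(1)] h cat_dom[OF cC h(1)] by auto
next
  case (gen_comp f g)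
  have cD: "category D" using F by (simp add: is_functor_def)
  then show ?case using gen_comp cat_comp[OF cD] by auto
qed

locale mainloc =
  fixes N1 :: "('o, 'm) cat" and N2 :: "('p, 'n) cat" and po :: "'o \<Rightarrow> 'p" and pm :: "'m \<Rightarrow> 'n"
  assumes n1: "nested_graph N1" and n2: "nested_graph N2"
    and adm: "admissible N1 N2 po pm" and epi: "epi_functor N1 N2 po pm"
begin

definition fv where "fv x \<longleftrightarrow> x \<in> cObj N1 \<and> \<not> (\<exists>f. is_flag N1 f \<and> cDom N1 f = x \<and> pm f = cId N2 (po x))"
definition RR where "RR = {(x, y). x \<in> cObj N1 \<and> y \<in> cObj N1 \<and> (x = y \<or> (fv x \<and> fv y \<and> po x = po y))}"

lemma cat1: "category N1" using n1 by (simp add: nested_graph_def)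
lemma cat2: "category N2" using n2 by (simp add: nested_graph_def)
lemma Fphi: "is_functor N1 N2 po pm" using adm by (simp add: admissible_def)

lemma RR_equiv: "equiv (cObj N1) RR"
  unfolding equiv_def refl_on_def sym_def trans_def RR_def by auto

lemma RR_po: "(a, b) \<in> RR \<Longrightarrow> po a = po b" unfolding RR_def by auto

sublocale QN: qn N1 RR
  by (unfold_locales) (auto simp: cat1 RR_equiv n1)

sublocale QF: qf N1 RR N2 po pm
  by (unfold_locales) (auto simp: Fphi RR_po)


abbreviation QQ where "QQ \<equiv> quot_cat N1 RR"
abbreviation kc where "kc p \<equiv> qeq N1 RR `` {p}"

lemma Q_nested1: "nested_graph QQ"
proof -
  obtain n1 :: nat and G1 where G1: "\<forall>a\<in>cObj N1. G1 a < n1" "\<forall>f\<in>cArr N1. G1 (cDom N1 f) \<le> G1 (cCod N1 f)"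
     "\<forall>f\<in>cArr N1. \<not> isid N1 f \<longrightarrow> G1 (cDom N1 f) < G1 (cCod N1 f)"
    using nested_rank[OF n1] by blast
  obtain n2 :: nat and G2 where G2: "\<forall>a\<in>cObj N2. G2 a < n2" "\<forall>f\<in>cArr N2. G2 (cDom N2 f) \<le> G2 (cCod N2 f)"
     "\<forall>f\<in>cArr N2. \<not> isid N2 f \<longrightarrow> G2 (cDom N2 f) < G2 (cCod N2 f)"
    using nested_rank[OF n2] by blast
  define rk where "rk x = n1 * G2 (po x) + (if fv x then n1 - 1 else G1 x)" for x
  have rkb: "rk x \<le> n1 * G2 (po x) + (n1 - 1)" "n1 * G2 (po x) \<le> rk x" if "x \<in> cObj N1" for x
    using G1(1) that unfolding rk_def by (auto simp: less_imp_le_nat)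
  have n1p: "x \<in> cObj N1 \<Longrightarrow> 0 < n1" for x using G1(1) by fastforce
  have strict: "rk (cDom N1 f) < rk (cCod N1 f)" if f: "f \<in> cArr N1" "\<not> isid N1 f" for f
  proof -
    let ?x = "cDom N1 f" and ?y = "cCod N1 f"
    have xo: "?x \<in> cObj N1" "?y \<in> cObj N1" using cat_dom[OF cat1 f(1)] cat_cod[OF cat1 f(1)] by auto
    have pf: "pm f \<in> cArr N2" "cDom N2 (pm f) = po ?x" "cCod N2 (pm f) = po ?y" using functor_arr[OF Fphi f(1)] by auto
    show ?thesis
    proof (cases "pm f = cId N2 (po ?x)")
      case True
      have nfv: "\<not> fv ?x" unfolding fv_def using f True by (auto simp: flag_iff_isid)
      have "po ?y = po ?x" using pf True cat2 functor_obj[OF Fphi xo(1)] by (metis cat_id_cod)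
      moreover have "G1 ?x < G1 ?y" "G1 ?y < n1" using G1 f xo by auto
      ultimately show ?thesis unfolding rk_def using nfv by auto
    next
      case False
      have "\<not> isid N2 (pm f)" using False pf by (simp add: isid_def)
      then have lt: "G2 (po ?x) < G2 (po ?y)" using G2(3) pf by metis
      have "rk ?x \<le> n1 * G2 (po ?x) + (n1 - 1)" using rkb xo by blast
      also have "\<dots> < n1 * G2 (po ?x) + n1" using n1p[OF xo(1)] by simp
      also have "\<dots> = n1 * (G2 (po ?x) + 1)" by simp
      also have "\<dots> \<le> n1 * G2 (po ?y)" using lt by (intro mult_le_mono2) simp
      also have "\<dots> \<le> rk ?y" using rkb xo by blast
      finally show ?thesis .
    qed
  qed
  show ?thesis
  proof (rule QN.Q_nested[of rk "n1 * n2"])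
    show "\<forall>a\<in>cObj N1. rk a < n1 * n2"
    proof
      fix a assume a: "a \<in> cObj N1"
      have g: "G2 (po a) < n2" using G2(1) functor_obj[OF Fphi a] by blast
      have "rk a \<le> n1 * G2 (po a) + (n1 - 1)" using rkb a by blast
      also have "\<dots> < n1 * (G2 (po a) + 1)" using n1p[OF a] by simp
      also have "\<dots> \<le> n1 * n2" using g by (intro mult_le_mono2) simp
      finally show "rk a < n1 * n2" .
    qed
    show "\<forall>f\<in>cArr N1. \<not> isid N1 f \<longrightarrow> rk (cDom N1 f) < rk (cCod N1 f)" using strict by blast
    show "\<forall>f\<in>cArr N1. rk (cDom N1 f) \<le> rk (cCod N1 f)"
    proof
      fix f assume f: "f \<in> cArr N1"
      show "rk (cDom N1 f) \<le> rk (cCod N1 f)"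
      proof (cases "isid N1 f")
        case True
        have "cCod N1 f = cDom N1 f" using True cat1 cat_dom[OF cat1 f] unfolding isid_def by (metis cat_id_cod)
        then show ?thesis by simp
      next
        case False then show ?thesis using strict f by (simp add: less_imp_le_nat)
      qed
    qed
    show "\<And>a b. (a, b) \<in> RR \<Longrightarrow> rk a = rk b" unfolding RR_def rk_def by auto
  qed
qed


abbreviation ko where "ko \<equiv> QF.kao"
abbreviation km where "km \<equiv> QF.kam"

lemma km_single: "f \<in> cArr N1 \<Longrightarrow> km (kc [f]) = pm f"
  using QF.kam_cls[of "[f]"] by simp

lemma kc_arr: "f \<in> cArr N1 \<Longrightarrow> kc [f] \<in> cArr QQ"
proof -
  assume f: "f \<in> cArr N1"
  then have "qpath N1 RR [f]" by simp
  then show ?thesis unfolding QN.Q_arr by blast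
qed

lemma kc_dom: "f \<in> cArr N1 \<Longrightarrow> cDom QQ (kc [f]) = RR `` {cDom N1 f}"
proof -
  assume f: "f \<in> cArr N1"
  then have q: "qpath N1 RR [f]" by simp
  show ?thesis using QN.Q_dom[OF q] by simp
qed

lemma contr_admissible: "admissible QQ N2 ko km"
  unfolding admissible_def
proof (intro conjI allI impI)
  show F: "is_functor QQ N2 ko km" by (rule QF.induced_functor)
  fix P assume P: "irreducible_flag QQ P"
  obtain f where f: "irreducible_flag N1 f" "P = kc [f]" using QN.irr_from_Q[OF P] by blast
  have fa: "f \<in> cArr N1" using f by (simp add: irreducible_flag_def is_flag_def)
  have "cDom QQ P = RR `` {cDom N1 f}" using f(2) kc_dom[OF fa] by simp
  then have ko: "ko (cDom QQ P) = po (cDom N1 f)" using QF.kao_cls[OF cat_dom[OF cat1 fa]] by simp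
  have "contracts N1 N2 po pm f \<or> irreducible_flag N2 (pm f)" using adm f(1) by (simp add: admissible_def)
  then show "contracts QQ N2 ko km P \<or> irreducible_flag N2 (km P)"
    using km_single[OF fa] f(2) ko by (simp add: contracts_def)
next
  fix P P' assume P: "irreducible_flag QQ P" and c: "contracts QQ N2 ko km P"
    and P': "irreducible_flag QQ P'" and d: "cDom QQ P' = cDom QQ P"
  obtain f where f: "irreducible_flag N1 f" "P = kc [f]" using QN.irr_from_Q[OF P] by blast
  obtain g where g: "irreducible_flag N1 g" "P' = kc [g]" using QN.irr_from_Q[OF P'] by blast
  have fa: "f \<in> cArr N1" "\<not> isid N1 f" using f by (auto simp: irreducible_flag_def flag_iff_isid)
  have ga: "g \<in> cArr N1" using g by (simp add: irreducible_flag_def is_flag_def)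
  have fo: "cDom N1 f \<in> cObj N1" "cDom N1 g \<in> cObj N1" using cat_dom[OF cat1] fa ga by auto
  have "cDom QQ P = RR `` {cDom N1 f}" using f(2) kc_dom[OF fa(1)] by simp
  then have kof: "ko (cDom QQ P) = po (cDom N1 f)" using QF.kao_cls[OF fo(1)] by simp
  have "cDom QQ P' = RR `` {cDom N1 g}" using g(2) kc_dom[OF ga] by simp
  then have kog: "ko (cDom QQ P') = po (cDom N1 g)" using QF.kao_cls[OF fo(2)] by simp
  have cf: "pm f = cId N2 (po (cDom N1 f))" using c km_single[OF fa(1)] f(2) kof by (simp add: contracts_def)
  have "RR `` {cDom N1 g} = RR `` {cDom N1 f}" using d f(2) g(2) kc_dom[OF fa(1)] kc_dom[OF ga] by simp
  then have r: "(cDom N1 g, cDom N1 f) \<in> RR" using QN.R_cls_iff[OF fo(2), of "cDom N1 f"] by simp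
  show "contracts QQ N2 ko km P'"
  proof (cases "cDom N1 g = cDom N1 f")
    case True
    have cfc: "contracts N1 N2 po pm f" using cf by (simp add: contracts_def)
    have A2: "\<And>f g. irreducible_flag N1 f \<Longrightarrow> contracts N1 N2 po pm f \<Longrightarrow> irreducible_flag N1 g \<Longrightarrow>
       cDom N1 g = cDom N1 f \<Longrightarrow> contracts N1 N2 po pm g" using adm unfolding admissible_def by blast
    have "contracts N1 N2 po pm g" by (rule A2[OF f(1) cfc g(1) True])
    then show ?thesis using km_single[OF ga] g(2) kog by (simp add: contracts_def)
  next
    case False
    then have "fv (cDom N1 f)" using r unfolding RR_def by auto
    moreover have "is_flag N1 f" using fa by (simp add: flag_iff_isid)
    ultimately show ?thesis using cf unfolding fv_def by blast
  qed
qed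

lemma contr_epi: "epi_functor QQ N2 ko km"
  unfolding epi_functor_def
proof (intro conjI subsetI)
  show "is_functor QQ N2 ko km" by (rule QF.induced_functor)
  fix g assume "g \<in> cArr N2"
  moreover have "cArr N2 \<subseteq> generated_arrows N2 (pm ` cArr N1)" using epi unfolding epi_functor_def by blast
  ultimately have g: "g \<in> generated_arrows N2 (pm ` cArr N1)" by blast
  have "pm ` cArr N1 \<subseteq> km ` cArr QQ"
  proof
    fix x assume "x \<in> pm ` cArr N1"
    then obtain f where f: "f \<in> cArr N1" "x = pm f" by blast
    have "x = km (kc [f])" using km_single[OF f(1)] f(2) by simp
    then show "x \<in> km ` cArr QQ" by (rule rev_image_eqI[OF kc_arr[OF f(1)]])
  qed
  then show "g \<in> generated_arrows N2 (km ` cArr QQ)" by (rule gen_mono[OF g])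
qed

end

context mainloc begin

lemma phi_surj_obj: assumes A: "A \<in> cObj N2" shows "\<exists>a\<in>cObj N1. po a = A"
proof -
  have i: "cId N2 A \<in> cArr N2" using cat_id[OF cat2 A] .
  have "cArr N2 \<subseteq> generated_arrows N2 (pm ` cArr N1)" using epi unfolding epi_functor_def by blast
  then have "cId N2 A \<in> generated_arrows N2 (pm ` cArr N1)" using i by blast
  from gen_dom[OF Fphi this] obtain a where "a \<in> cObj N1" "cDom N2 (cId N2 A) = po a" by blast
  then show ?thesis using cat_id_dom[OF cat2 A] by auto
qed

lemma fv_exists: assumes A: "A \<in> cObj N2" shows "\<exists>y. fv y \<and> po y = A"
proof -
  obtain n1 :: nat and G1 where G1: "\<forall>a\<in>cObj N1. G1 a < n1" "\<forall>f\<in>cArr N1. G1 (cDom N1 f) \<le> G1 (cCod N1 f)"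
     "\<forall>f\<in>cArr N1. \<not> isid N1 f \<longrightarrow> G1 (cDom N1 f) < G1 (cCod N1 f)"
    using nested_rank[OF n1] by blast
  have "x \<in> cObj N1 \<Longrightarrow> po x = A \<Longrightarrow> \<exists>y. fv y \<and> po y = A" for x
  proof (induction x rule: measure_induct_rule[of "\<lambda>x. n1 - G1 x"])
    case (less x)
    show ?case
    proof (cases "fv x")
      case True then show ?thesis using less by blast
    next
      case False
      then obtain f where f: "is_flag N1 f" "cDom N1 f = x" "pm f = cId N2 (po x)" using less.prems unfolding fv_def by blast
      have fa: "f \<in> cArr N1" "\<not> isid N1 f" using f(1) by (auto simp: flag_iff_isid)
      let ?y = "cCod N1 f"
      have yo: "?y \<in> cObj N1" using cat_cod[OF cat1 fa(1)] .
      have xo: "po x \<in> cObj N2" using functor_obj[OF Fphi less.prems(1)] .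
      have "cCod N2 (pm f) = po ?y" using functor_arr[OF Fphi fa(1)] by simp
      then have py: "po ?y = A" using f(3) cat_id_cod[OF cat2 xo] less.prems(2) by simp
      have "G1 x < G1 ?y" "G1 ?y < n1" using G1 fa f(2) yo by auto
      then have "n1 - G1 ?y < n1 - G1 x" by simp
      then show ?thesis using less.IH yo py by blast
    qed
  qed
  then show ?thesis using phi_surj_obj[OF A] by blast
qed

abbreviation FF where "FF A \<equiv> fiber QQ N2 ko km A"

lemma flag_FF: "is_flag (FF A) P \<longleftrightarrow> is_flag QQ P \<and> km P = cId N2 A"
  by (auto simp: is_flag_def fiber_def)

lemma vertex_ex: assumes A: "A \<in> cObj N2" and y: "fv y" "po y = A" shows "is_vertex (FF A) (RR `` {y})"
  unfolding is_vertex_def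
proof (intro conjI notI)
  have yo: "y \<in> cObj N1" using y unfolding fv_def by blast
  have "RR `` {y} \<in> cObj QQ" using QN.Q_obj quotientI[OF yo] by simp
  moreover have "ko (RR `` {y}) = A" using QF.kao_cls[OF yo] y by simp
  ultimately show "RR `` {y} \<in> cObj (FF A)" by (simp add: fiber_def)
next
  assume "\<exists>P. is_flag (FF A) P \<and> cDom (FF A) P = RR `` {y}"
  then obtain P where P: "is_flag QQ P" "km P = cId N2 A" "cDom QQ P = RR `` {y}"
    using flag_FF by (auto simp: fiber_def)
  obtain p where p: "qpath N1 RR p" "P = kc p" using P(1) QN.Q_arr unfolding is_flag_def by blast
  let ?s = "red N1 RR p"
  have rs: "rd N1 ?s" using QN.flag_iff[OF p(1)] p(2) P(1) by simp
  have ps: "(p, ?s) \<in> qeq N1 RR" using QN.red_nf[OF p(1)] by simp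
  have qs: "qpath N1 RR ?s" "RR `` {cDom N1 (hd ?s)} = RR `` {cDom N1 (hd p)}"
    using QN.qeq_props[OF ps p(1)] by auto
  have Ps: "P = kc ?s" using p(2) QN.class_eq_iff[of p ?s] ps by simp
  have kmP: "km P = pathv N2 pm ?s" using QF.kam_cls[OF qs(1)] Ps by simp
  obtain a t where at: "?s = a # t" using rd_ne[OF rs] by (cases ?s) auto
  have a: "a \<in> cArr N1" "\<not> isid N1 a" using rd_hd[OF rs] at by auto
  have Ao: "A \<in> cObj N2" by (rule A)
  have ida: "isid N2 (pm a)"
  proof (cases "t = []")
    case True
    then have "pm a = cId N2 A" using P(2) kmP at by simp
    then show ?thesis using isid_id[OF cat2 Ao] by simp
  next
    case False
    have qt: "(cCod N1 a, cDom N1 (hd t)) \<in> RR" "qpath N1 RR t" using qs(1) at qpath_Cons[OF False, of N1 RR a] by auto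
    have pt: "pathv N2 pm t \<in> cArr N2" "cDom N2 (pathv N2 pm t) = po (cDom N1 (hd t))" using QF.pv_props[OF qt(2)] by auto
    have pa: "pm a \<in> cArr N2" "cCod N2 (pm a) = po (cCod N1 a)" using functor_arr[OF Fphi a(1)] by auto
    have j: "cCod N2 (pm a) = cDom N2 (pathv N2 pm t)" using pa pt RR_po[OF qt(1)] by simp
    have "pathv N2 pm ?s = cComp N2 (pathv N2 pm t) (pm a)" using at pathv_Cons[OF False, of N2 pm a] by simp
    then have "isid N2 (cComp N2 (pathv N2 pm t) (pm a))" using P(2) kmP isid_id[OF cat2 Ao] by simp
    then show ?thesis using nested_comp_id[OF n2 pa(1) pt(1) j] by blast
  qed
  have ca: "pm a = cId N2 (po (cDom N1 a))" using ida functor_arr[OF Fphi a(1)] by (simp add: isid_def)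
  have dao: "cDom N1 a \<in> cObj N1" using cat_dom[OF cat1 a(1)] .
  have "RR `` {cDom N1 a} = RR `` {y}" using P(3) QN.Q_dom[OF p(1)] qs(2) at p(2) by simp
  then have "(cDom N1 a, y) \<in> RR" using QN.R_cls_iff[OF dao, of y] by simp
  then have "fv (cDom N1 a)" using y(1) unfolding RR_def by auto
  moreover have "is_flag N1 a" using a by (simp add: flag_iff_isid)
  ultimately show False using ca unfolding fv_def by blast
qed

lemma vertex_fv: assumes V: "is_vertex (FF A) V" shows "\<exists>x. fv x \<and> po x = A \<and> V = RR `` {x}"
proof -
  have Vo: "V \<in> cObj QQ" "ko V = A" using V by (auto simp: is_vertex_def fiber_def)
  obtain x where x: "x \<in> cObj N1" "V = RR `` {x}" using Vo(1) unfolding QN.Q_obj by (rule quotientE)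
  have px: "po x = A" using Vo(2) x QF.kao_cls[OF x(1)] by simp
  have "fv x"
  proof (rule ccontr)
    assume "\<not> fv x"
    then obtain f where f: "is_flag N1 f" "cDom N1 f = x" "pm f = cId N2 (po x)" using x(1) unfolding fv_def by blast
    have fa: "f \<in> cArr N1" "\<not> isid N1 f" using f(1) by (auto simp: flag_iff_isid)
    have qf: "qpath N1 RR [f]" using fa by simp
    have "is_flag QQ (kc [f])" using QN.flag_iff[OF qf] fa by simp
    moreover have "km (kc [f]) = cId N2 A" using km_single[OF fa(1)] f(3) px by simp
    ultimately have "is_flag (FF A) (kc [f])" using flag_FF by blast
    moreover have "cDom (FF A) (kc [f]) = V" using kc_dom[OF fa(1)] f(2) x(2) by (simp add: fiber_def)
    ultimately show False using V unfolding is_vertex_def by blast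
  qed
  then show ?thesis using px x by blast
qed

lemma fiber_corolla: assumes A: "A \<in> cObj N2" shows "corolla (FF A)"
  unfolding corolla_def
proof (intro conjI)
  show "nested_graph (FF A)" using fiber_nested[OF Q_nested1 QF.induced_functor A] .
  obtain y where y: "fv y" "po y = A" using fv_exists[OF A] by blast
  have v: "is_vertex (FF A) (RR `` {y})" using vertex_ex[OF A y] .
  show "\<exists>!a. is_vertex (FF A) a"
  proof (rule ex1I[of "is_vertex (FF A)" "RR `` {y}", OF v])
    fix V assume "is_vertex (FF A) V"
    then obtain x where x: "fv x" "po x = A" "V = RR `` {x}" using vertex_fv by blast
    have "(x, y) \<in> RR" using x y unfolding RR_def fv_def by auto
    then show "V = RR `` {y}" using QN.R_cls x(3) by simp
  qed
qed

lemma contr: "contraction QQ N2 ko km"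
  unfolding contraction_def using contr_admissible contr_epi fiber_corolla by blast

lemma decomposition: "\<exists>(N2' :: ('o set, 'm list set) cat) \<mu>o \<mu>m \<kappa>o \<kappa>m.
           nested_graph N2' \<and> merger N1 N2' \<mu>o \<mu>m \<and> contraction N2' N2 \<kappa>o \<kappa>m \<and>
           (\<forall>a\<in>cObj N1. po a = \<kappa>o (\<mu>o a)) \<and> (\<forall>f\<in>cArr N1. pm f = \<kappa>m (\<mu>m f))"
proof -
  have 1: "\<forall>a\<in>cObj N1. po a = ko (QN.muo a)" using QF.kao_cls by (simp add: QN.muo_def)
  have 2: "\<forall>f\<in>cArr N1. pm f = km (QN.mum f)" using km_single by (simp add: QN.mum_def)
  show ?thesis
    apply (rule exI[of _ QQ], rule exI[of _ QN.muo], rule exI[of _ QN.mum], rule exI[of _ ko], rule exI[of _ km])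
    using Q_nested1 QN.proj_merger contr 1 2 by blast
qed

end

theorem mainTheorem3:
  fixes N1 :: "('o, 'm) cat" and N2 :: "('p, 'n) cat"
    and \<phi>o :: "'o \<Rightarrow> 'p" and \<phi>m :: "'m \<Rightarrow> 'n"
  assumes "nested_graph N1" and "nested_graph N2"
    and "admissible N1 N2 \<phi>o \<phi>m" and "epi_functor N1 N2 \<phi>o \<phi>m"
  shows "\<exists>(N2' :: ('o set, 'm list set) cat) \<mu>o \<mu>m \<kappa>o \<kappa>m.
           nested_graph N2' \<and> merger N1 N2' \<mu>o \<mu>m \<and> contraction N2' N2 \<kappa>o \<kappa>m \<and>
           (\<forall>a\<in>cObj N1. \<phi>o a = \<kappa>o (\<mu>o a)) \<and> (\<forall>f\<in>cArr N1. \<phi>m f = \<kappa>m (\<mu>m f))"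
proof -
  interpret M: mainloc N1 N2 \<phi>o \<phi>m using assms by unfold_locales
  show ?thesis by (rule M.decomposition)
qed

end
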